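(* Let $\mathcal C$ be a convex arc with total curvature $\int_{\mathcal C}\kappa\,ds\le\pi$ whose radius of curvature satisfies $R_1\le\rho\le R_2$ at every point, for constants $0<R_1\le R_2$. Let $\mathcal L$ be a lattice in $\mathbb R^2$ and let $\delta>0$ satisfy $$\delta<\frac{d_{\mathcal L}^2}{2\left(R_2+d_{\mathcal L}+\sqrt{(R_2+d_{\mathcal L})^2-d_{\mathcal L}^2}\right)}.$$ Let $L=\mathrm{Length}(\mathcal C)$. If $$\frac{L^3}{8R_1}+2L\delta+3\delta^2\le A_{\mathcal L},$$ then $$\#\{Q\in\mathcal L:\mathrm{dist}(Q,\mathcal C)<\delta\}\le 2.$$
   Context: A lattice is a set $\mathcal L=\mathcal L(v_0,v_1,v_2)=\{v_0+mv_1+nv_2: m,n\in\mathbb Z\}$ where $v_0,v_1,v_2\in\mathbb R^2$ and $v_1,v_2$ are linearly independent; $A_{\mathcal L}=|\det(v_1,v_2)|$ and $d_{\mathcal L}=\min\{\|P-Q\|:P,Q\in\mathcal L,\ P\ne Q\}$. Curves are of class $C^2$ with nonvanishing first and second derivative vectors, oriented so that the curvature $\kappa$ is positive; a convex arc is such a non-closed curve on the boundary of a convex planar region. $\rho=1/\kappa$, $s$ is arclength, and $\mathrm{dist}(Q,\mathcal C)$ is the Euclidean distance from $Q$ to $\mathcal C$. *)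

theory Defs
  imports "HOL-Analysis.Analysis"
begin

definition cross2 :: "real^2 \<Rightarrow> real^2 \<Rightarrow> real" where
  "cross2 u v = u$1 * v$2 - u$2 * v$1"

definition lattice :: "real^2 \<Rightarrow> real^2 \<Rightarrow> real^2 \<Rightarrow> (real^2) set" where
  "lattice v0 v1 v2 = {v0 + of_int m *\<^sub>R v1 + of_int n *\<^sub>R v2 | m n. True}"

definition lattice_area :: "real^2 \<Rightarrow> real^2 \<Rightarrow> real" where
  "lattice_area v1 v2 = \<bar>cross2 v1 v2\<bar>"

definition lattice_mindist :: "(real^2) set \<Rightarrow> real" where
  "lattice_mindist L = Inf {dist P Q | P Q. P \<in> L \<and> Q \<in> L \<and> P \<noteq> Q}"

(* signed curvature of a parametrized plane curve with velocity g1 t and acceleration g2 t *)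
definition curvature :: "(real \<Rightarrow> real^2) \<Rightarrow> (real \<Rightarrow> real^2) \<Rightarrow> real \<Rightarrow> real" where
  "curvature g1 g2 t = cross2 (g1 t) (g2 t) / norm (g1 t) ^ 3"

end

theory Submission
  imports Defs
begin


definition rot90 :: "real^2 \<Rightarrow> real^2" where
  "rot90 v = (\<chi> i. if i = 1 then - v$2 else v$1)"

definition ephi :: "real \<Rightarrow> real^2" where
  "ephi x = (\<chi> i. if i = 1 then cos x else sin x)"

lemma rot90_nth [simp]: "rot90 v $ 1 = - v$2" "rot90 v $ 2 = v$1"
  by (simp_all add: rot90_def)

lemma ephi_nth [simp]: "ephi x $ 1 = cos x" "ephi x $ 2 = sin x"
  by (simp_all add: ephi_def)

lemma inner2: "inner (u::real^2) v = u$1 * v$1 + u$2 * v$2"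
  by (simp add: inner_vec_def sum_2)

lemma norm2sq: "(norm (u::real^2))^2 = u$1^2 + u$2^2"
  unfolding power2_norm_eq_inner inner2 by (simp add: power2_eq_square)

lemma vec2_eq: "(u::real^2) = v \<longleftrightarrow> u$1 = v$1 \<and> u$2 = v$2"
  by (auto simp: vec_eq_iff forall_2)

lemma lagrange2: "(cross2 u v)^2 + (inner u v)^2 = (norm u)^2 * (norm v)^2"
  unfolding norm2sq by (simp add: cross2_def inner2 power2_eq_square algebra_simps)

lemma abs_cross2_le: "\<bar>cross2 u v\<bar> \<le> norm u * norm v"
proof -
  have "(cross2 u v)^2 \<le> (norm u)^2 * (norm v)^2"
    using lagrange2[of u v] by (metis le_add_same_cancel1 zero_le_power2)
  hence "(\<bar>cross2 u v\<bar>)^2 \<le> (norm u * norm v)^2" by (simp add: power_mult_distrib)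
  thus ?thesis by (rule power2_le_imp_le) auto
qed

lemma norm_ephi [simp]: "norm (ephi x) = 1"
proof -
  have "(norm (ephi x))^2 = 1" by (simp add: norm2sq)
  thus ?thesis by (metis norm_ge_zero power2_eq_1_iff zero_le_one abs_of_nonneg abs_power2 power2_abs real_sqrt_abs real_sqrt_one)
qed

lemma norm_rot90 [simp]: "norm (rot90 v) = norm v"
proof -
  have "(norm (rot90 v))^2 = (norm v)^2" by (simp add: norm2sq algebra_simps)
  thus ?thesis by (simp add: power2_eq_iff_nonneg)
qed

lemma inner_rot90: "inner (rot90 u) v = cross2 u v"
  by (simp add: inner2 cross2_def)

lemma cross2_add_right: "cross2 u (v + w) = cross2 u v + cross2 u w"
  by (simp add: cross2_def algebra_simps)
lemma cross2_diff_right: "cross2 u (v - w) = cross2 u v - cross2 u w"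
  by (simp add: cross2_def algebra_simps)
lemma cross2_add_left: "cross2 (v + w) u = cross2 v u + cross2 w u"
  by (simp add: cross2_def algebra_simps)
lemma cross2_diff_left: "cross2 (v - w) u = cross2 v u - cross2 w u"
  by (simp add: cross2_def algebra_simps)
lemma cross2_scale_left: "cross2 (c *\<^sub>R v) u = c * cross2 v u"
  by (simp add: cross2_def algebra_simps)
lemma cross2_scale_right: "cross2 u (c *\<^sub>R v) = c * cross2 u v"
  by (simp add: cross2_def algebra_simps)
lemma cross2_self [simp]: "cross2 u u = 0"
  by (simp add: cross2_def algebra_simps)
lemma cross2_anti: "cross2 u v = - cross2 v u"
  by (simp add: cross2_def algebra_simps)

lemma deriv_cmp:
  fixes f g :: "real \<Rightarrow> real"
  assumes "p \<le> q"
    and "\<And>x. x \<in> {p..q} \<Longrightarrow> (f has_real_derivative f' x) (at x within {p..q})"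
    and "\<And>x. x \<in> {p..q} \<Longrightarrow> (g has_real_derivative g' x) (at x within {p..q})"
    and "\<And>x. x \<in> {p..q} \<Longrightarrow> f' x \<le> g' x"
  shows "f q - f p \<le> g q - g p"
proof -
  have "(f' has_integral (f q - f p)) {p..q}"
    by (rule fundamental_theorem_of_calculus) (use assms in \<open>auto simp: has_real_derivative_iff_has_vector_derivative\<close>)
  moreover have "(g' has_integral (g q - g p)) {p..q}"
    by (rule fundamental_theorem_of_calculus) (use assms in \<open>auto simp: has_real_derivative_iff_has_vector_derivative\<close>)
  ultimately show ?thesis using has_integral_le assms(4) by blast
qed

lemma deriv_norm_cmp:
  fixes f :: "real \<Rightarrow> 'a::banach" and g :: "real \<Rightarrow> real"
  assumes "p \<le> q"
    and "\<And>x. x \<in> {p..q} \<Longrightarrow> (f has_vector_derivative f' x) (at x within {p..q})"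
    and "\<And>x. x \<in> {p..q} \<Longrightarrow> (g has_real_derivative g' x) (at x within {p..q})"
    and "\<And>x. x \<in> {p..q} \<Longrightarrow> norm (f' x) \<le> g' x"
  shows "norm (f q - f p) \<le> g q - g p"
proof -
  have 1: "(f' has_integral (f q - f p)) {p..q}"
    by (rule fundamental_theorem_of_calculus) (use assms in auto)
  have 2: "(g' has_integral (g q - g p)) {p..q}"
    by (rule fundamental_theorem_of_calculus) (use assms in \<open>auto simp: has_real_derivative_iff_has_vector_derivative\<close>)
  have "norm (integral {p..q} f') \<le> integral {p..q} g'"
    by (rule integral_norm_bound_integral) (use 1 2 assms(4) in auto)
  thus ?thesis using 1 2 by (simp add: integral_unique)
qed

lemma deriv_zero_const:
  fixes f :: "real \<Rightarrow> real"
  assumes "p \<le> q"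
    and "\<And>x. x \<in> {p..q} \<Longrightarrow> (f has_real_derivative 0) (at x within {p..q})"
  shows "f q = f p"
proof -
  have "f q - f p \<le> (\<lambda>_. 0) q - (\<lambda>_. 0::real) p"
    by (rule deriv_cmp[OF assms(1), where f=f and f'="\<lambda>_. 0" and g="\<lambda>_. 0" and g'="\<lambda>_. 0"]) (use assms(2) in auto)
  moreover have "(\<lambda>_. 0) q - (\<lambda>_. 0::real) p \<le> f q - f p"
    by (rule deriv_cmp[OF assms(1), where g=f and g'="\<lambda>_. 0" and f="\<lambda>_. 0" and f'="\<lambda>_. 0"]) (use assms(2) in auto)
  ultimately show ?thesis by simp
qed

lemma ephi_axis: "ephi x = cos x *\<^sub>R axis 1 1 + sin x *\<^sub>R axis 2 1"
  by (simp add: vec2_eq axis_def)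

lemma rot90_ephi: "rot90 (ephi x) = (- sin x) *\<^sub>R axis 1 1 + cos x *\<^sub>R axis 2 1"
  by (simp add: vec2_eq axis_def)

lemma d_ephi:
  assumes "(f has_real_derivative f') (at x within S)"
  shows "((\<lambda>x. ephi (f x)) has_vector_derivative (f' *\<^sub>R rot90 (ephi (f x)))) (at x within S)"
proof -
  have "((\<lambda>x. cos (f x) *\<^sub>R axis 1 (1::real) + sin (f x) *\<^sub>R axis (2::2) 1) has_vector_derivative
     (cos (f x) *\<^sub>R 0 + (- sin (f x) * f') *\<^sub>R axis 1 1 + (sin (f x) *\<^sub>R 0 + (cos (f x) * f') *\<^sub>R axis 2 1))) (at x within S)"
    by (intro has_vector_derivative_add has_vector_derivative_scaleR has_vector_derivative_const
          DERIV_cos[THEN DERIV_chain2] DERIV_sin[THEN DERIV_chain2] assms)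
  moreover have "(\<lambda>x. cos (f x) *\<^sub>R axis 1 (1::real) + sin (f x) *\<^sub>R axis (2::2) 1) = (\<lambda>x. ephi (f x))"
    by (simp add: ephi_axis)
  moreover have "cos (f x) *\<^sub>R 0 + (- sin (f x) * f') *\<^sub>R axis 1 1 + (sin (f x) *\<^sub>R 0 + (cos (f x) * f') *\<^sub>R axis 2 1) = f' *\<^sub>R rot90 (ephi (f x))"
    by (simp add: vec2_eq axis_def)
  ultimately show ?thesis by simp
qed

lemma inner_rot90_self: "inner (rot90 u) u = 0" "inner u (rot90 u) = 0"
  by (simp_all add: inner2 algebra_simps)

lemma inner_rot90_swap: "inner u (rot90 v) + inner (rot90 u) v = 0"
  by (simp add: inner2 algebra_simps)

lemma unit_eq_by_inner:
  fixes x y :: "real^2"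
  assumes "norm x = 1" "norm y = 1" "inner x y = 1"
  shows "x = y"
proof -
  have xx: "inner x x = 1" "inner y y = 1" using assms by (simp_all add: power2_norm_eq_inner[symmetric])
  have "(norm (x - y))^2 = 0"
    unfolding power2_norm_eq_inner using assms xx
    by (simp add: inner_diff_left inner_diff_right inner_commute)
  thus ?thesis by simp
qed

lemma deriv_cmp_sub:
  fixes f g :: "real \<Rightarrow> real"
  assumes "a \<le> p" "p \<le> q" "q \<le> b"
    and "\<And>x. x \<in> {a..b} \<Longrightarrow> (f has_real_derivative f' x) (at x within {a..b})"
    and "\<And>x. x \<in> {a..b} \<Longrightarrow> (g has_real_derivative g' x) (at x within {a..b})"
    and "\<And>x. x \<in> {p..q} \<Longrightarrow> f' x \<le> g' x"
  shows "f q - f p \<le> g q - g p"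
proof (rule deriv_cmp[OF assms(2)])
  have sub: "{p..q} \<subseteq> {a..b}" using assms by auto
  show "(f has_real_derivative f' x) (at x within {p..q})" if "x \<in> {p..q}" for x
    using assms(4)[of x] that sub by (auto intro: has_field_derivative_subset)
  show "(g has_real_derivative g' x) (at x within {p..q})" if "x \<in> {p..q}" for x
    using assms(5)[of x] that sub by (auto intro: has_field_derivative_subset)
qed (use assms in auto)

lemma deriv_norm_cmp_sub:
  fixes f :: "real \<Rightarrow> 'a::banach" and g :: "real \<Rightarrow> real"
  assumes "a \<le> p" "p \<le> q" "q \<le> b"
    and "\<And>x. x \<in> {a..b} \<Longrightarrow> (f has_vector_derivative f' x) (at x within {a..b})"
    and "\<And>x. x \<in> {a..b} \<Longrightarrow> (g has_real_derivative g' x) (at x within {a..b})"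
    and "\<And>x. x \<in> {p..q} \<Longrightarrow> norm (f' x) \<le> g' x"
  shows "norm (f q - f p) \<le> g q - g p"
proof (rule deriv_norm_cmp[OF assms(2)])
  have sub: "{p..q} \<subseteq> {a..b}" using assms by auto
  show "(f has_vector_derivative f' x) (at x within {p..q})" if "x \<in> {p..q}" for x
    using assms(4)[of x] that sub by (auto intro: has_vector_derivative_within_subset)
  show "(g has_real_derivative g' x) (at x within {p..q})" if "x \<in> {p..q}" for x
    using assms(5)[of x] that sub by (auto intro: has_field_derivative_subset)
qed (use assms in auto)

lemma cross2_as_inner: "cross2 u v = inner (rot90 u) v"
  by (simp add: inner_rot90)

lemma d_cross_right:
  assumes "(f has_vector_derivative f') (at x within S)"
  shows "((\<lambda>x. cross2 c (f x)) has_real_derivative cross2 c f') (at x within S)"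
proof -
  have "((\<lambda>x. inner (rot90 c) (f x)) has_vector_derivative (inner (rot90 c) f' + inner 0 (f x))) (at x within S)"
    by (rule bounded_bilinear.has_vector_derivative[OF bounded_bilinear_inner has_vector_derivative_const assms])
  thus ?thesis unfolding cross2_as_inner has_real_derivative_iff_has_vector_derivative by simp
qed

lemma d_cross_left:
  assumes "(f has_vector_derivative f') (at x within S)"
  shows "((\<lambda>x. cross2 (f x) c) has_real_derivative cross2 f' c) (at x within S)"
proof -
  have "((\<lambda>x. - cross2 c (f x)) has_real_derivative - cross2 c f') (at x within S)"
    by (intro DERIV_minus d_cross_right assms)
  thus ?thesis by (subst (1 2) cross2_anti) simp
qed



locale curve =
  fixes \<gamma> \<gamma>1 \<gamma>2 :: "real \<Rightarrow> real^2" and a b R1 R2 :: real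
  assumes ab: "a < b"
    and d1: "\<And>t. t \<in> {a..b} \<Longrightarrow> (\<gamma> has_vector_derivative \<gamma>1 t) (at t within {a..b})"
    and d2: "\<And>t. t \<in> {a..b} \<Longrightarrow> (\<gamma>1 has_vector_derivative \<gamma>2 t) (at t within {a..b})"
    and C2: "continuous_on {a..b} \<gamma>2"
    and nz1: "\<And>t. t \<in> {a..b} \<Longrightarrow> \<gamma>1 t \<noteq> 0"
    and kpos: "\<And>t. t \<in> {a..b} \<Longrightarrow> curvature \<gamma>1 \<gamma>2 t > 0"
    and total_curv: "integral {a..b} (\<lambda>t. curvature \<gamma>1 \<gamma>2 t * norm (\<gamma>1 t)) \<le> pi"
    and R1pos: "0 < R1" and R12: "R1 \<le> R2"
    and rho: "\<And>t. t \<in> {a..b} \<Longrightarrow> R1 \<le> 1 / curvature \<gamma>1 \<gamma>2 t \<and> 1 / curvature \<gamma>1 \<gamma>2 t \<le> R2"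
begin

definition nr :: "real \<Rightarrow> real" where "nr t = norm (\<gamma>1 t)"
definition T :: "real \<Rightarrow> real^2" where "T t = inverse (nr t) *\<^sub>R \<gamma>1 t"
definition w :: "real \<Rightarrow> real" where "w t = curvature \<gamma>1 \<gamma>2 t * norm (\<gamma>1 t)"
definition s :: "real \<Rightarrow> real" where "s t = integral {a..t} nr"

lemma nr_pos: "t \<in> {a..b} \<Longrightarrow> nr t > 0"
  using nz1 by (simp add: nr_def)

lemma cont_g1: "continuous_on {a..b} \<gamma>1"
  using d2 by (rule continuous_on_vector_derivative)

lemma cont_g: "continuous_on {a..b} \<gamma>"
  using d1 by (rule continuous_on_vector_derivative)

lemma cont_nr: "continuous_on {a..b} nr"
  unfolding nr_def by (intro continuous_intros cont_g1)

lemma w_alt: "w t = cross2 (\<gamma>1 t) (\<gamma>2 t) / nr t ^ 2"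
  by (cases "nr t = 0") (simp_all add: w_def curvature_def nr_def power2_eq_square power3_eq_cube)

lemma cont_w: "continuous_on {a..b} w"
proof -
  have "continuous_on {a..b} (\<lambda>t. cross2 (\<gamma>1 t) (\<gamma>2 t) / nr t ^ 2)"
    unfolding cross2_def
    by (intro continuous_intros cont_g1 C2 cont_nr) (use nr_pos in force)
  thus ?thesis by (simp add: w_alt[abs_def])
qed

lemma w_pos: "t \<in> {a..b} \<Longrightarrow> w t > 0"
  using kpos nz1 by (simp add: w_def)

lemma nr_le: "t \<in> {a..b} \<Longrightarrow> nr t \<le> R2 * w t"
proof -
  assume t: "t \<in> {a..b}"
  define k where "k = curvature \<gamma>1 \<gamma>2 t"
  have k: "k > 0" using kpos t by (simp add: k_def)
  have "1 / k \<le> R2" using rho t by (simp add: k_def)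
  hence "1 \<le> R2 * k" using k by (simp add: divide_le_eq mult.commute)
  hence "nr t * 1 \<le> nr t * (R2 * k)" using nr_pos[OF t] by (intro mult_left_mono) auto
  thus ?thesis by (simp add: w_def k_def nr_def algebra_simps)
qed

lemma nr_ge: "t \<in> {a..b} \<Longrightarrow> R1 * w t \<le> nr t"
proof -
  assume t: "t \<in> {a..b}"
  define k where "k = curvature \<gamma>1 \<gamma>2 t"
  have k: "k > 0" using kpos t by (simp add: k_def)
  have "R1 \<le> 1 / k" using rho t by (simp add: k_def)
  hence "R1 * k \<le> 1" using k by (simp add: le_divide_eq)
  hence "nr t * (R1 * k) \<le> nr t * 1" using nr_pos[OF t] by (intro mult_left_mono) auto
  thus ?thesis by (simp add: w_def k_def nr_def algebra_simps)
qed

lemma ds: "t \<in> {a..b} \<Longrightarrow> (s has_real_derivative nr t) (at t within {a..b})"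
  unfolding s_def has_real_derivative_iff_has_vector_derivative
  by (rule integral_has_vector_derivative[OF cont_nr])

lemma dnr: "t \<in> {a..b} \<Longrightarrow> (nr has_real_derivative (inner (\<gamma>2 t) (\<gamma>1 t) / nr t)) (at t within {a..b})"
proof -
  assume t: "t \<in> {a..b}"
  have 1: "(\<gamma>1 has_derivative (\<lambda>h. h *\<^sub>R \<gamma>2 t)) (at t within {a..b})"
    using d2[OF t] by (simp add: has_vector_derivative_def)
  have 2: "(norm has_derivative (\<lambda>h. inner h (sgn (\<gamma>1 t)))) (at (\<gamma>1 t))"
    using has_derivative_norm[OF nz1[OF t]] .
  have "((\<lambda>x. norm (\<gamma>1 x)) has_derivative (\<lambda>h. inner (h *\<^sub>R \<gamma>2 t) (sgn (\<gamma>1 t)))) (at t within {a..b})"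
    using has_derivative_compose[OF 1 2] .
  moreover have "(\<lambda>h. inner (h *\<^sub>R \<gamma>2 t) (sgn (\<gamma>1 t))) = (*) (inner (\<gamma>2 t) (\<gamma>1 t) / nr t)"
    by (auto simp: fun_eq_iff sgn_div_norm nr_def inner_commute divide_inverse mult_ac)
  ultimately show ?thesis by (simp add: has_field_derivative_def nr_def[abs_def])
qed

lemma rot_identity:
  fixes x y :: "real^2" and n :: real
  assumes n: "n > 0" "n^2 = (norm x)^2"
  shows "inverse n *\<^sub>R y + (- (inverse n * (inner y x / n) * inverse n)) *\<^sub>R x
       = (cross2 x y / n^2) *\<^sub>R rot90 (inverse n *\<^sub>R x)"
proof -
  have nn: "n^2 = x$1^2 + x$2^2" using n norm2sq by simp
  have e1: "y$1 * n^2 - (y$1*x$1 + y$2*x$2) * x$1 = - (x$1 * y$2 - x$2 * y$1) * x$2"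
    unfolding nn by (simp add: algebra_simps power2_eq_square)
  have e2: "y$2 * n^2 - (y$1*x$1 + y$2*x$2) * x$2 = (x$1 * y$2 - x$2 * y$1) * x$1"
    unfolding nn by (simp add: algebra_simps power2_eq_square)
  let ?L = "inverse n *\<^sub>R y + (- (inverse n * (inner y x / n) * inverse n)) *\<^sub>R x"
  let ?R = "(cross2 x y / n^2) *\<^sub>R rot90 (inverse n *\<^sub>R x)"
  have l1: "?L$1 = (y$1 * n^2 - (y$1*x$1 + y$2*x$2) * x$1) / n^3"
    using n(1) by (simp add: inner2 field_simps power2_eq_square power3_eq_cube)
  have r1: "?R$1 = (- (x$1 * y$2 - x$2 * y$1) * x$2) / n^3"
    using n(1) by (simp add: cross2_def field_simps power2_eq_square power3_eq_cube)
  have l2: "?L$2 = (y$2 * n^2 - (y$1*x$1 + y$2*x$2) * x$2) / n^3"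
    using n(1) by (simp add: inner2 field_simps power2_eq_square power3_eq_cube)
  have r2: "?R$2 = ((x$1 * y$2 - x$2 * y$1) * x$1) / n^3"
    using n(1) by (simp add: cross2_def field_simps power2_eq_square power3_eq_cube)
  show ?thesis unfolding vec2_eq using l1 r1 l2 r2 e1 e2 by simp
qed

lemma dT: "t \<in> {a..b} \<Longrightarrow> (T has_vector_derivative (w t *\<^sub>R rot90 (T t))) (at t within {a..b})"
proof -
  assume t: "t \<in> {a..b}"
  have "((\<lambda>t. inverse (nr t) *\<^sub>R \<gamma>1 t) has_vector_derivative
      (inverse (nr t) *\<^sub>R \<gamma>2 t + (- (inverse (nr t) * (inner (\<gamma>2 t) (\<gamma>1 t) / nr t) * inverse (nr t))) *\<^sub>R \<gamma>1 t))
      (at t within {a..b})"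
    by (intro has_vector_derivative_scaleR DERIV_inverse' dnr[OF t] d2[OF t]) (use nr_pos[OF t] in auto)
  moreover have "inverse (nr t) *\<^sub>R \<gamma>2 t + (- (inverse (nr t) * (inner (\<gamma>2 t) (\<gamma>1 t) / nr t) * inverse (nr t))) *\<^sub>R \<gamma>1 t
     = w t *\<^sub>R rot90 (T t)"
    unfolding w_alt T_def by (rule rot_identity) (use nr_pos[OF t] in \<open>auto simp: nr_def\<close>)
  ultimately show ?thesis by (simp add: T_def[abs_def])
qed

lemma norm_T: "t \<in> {a..b} \<Longrightarrow> norm (T t) = 1"
  using nr_pos[of t] by (simp add: T_def nr_def)

lemma g1_eq: "t \<in> {a..b} \<Longrightarrow> \<gamma>1 t = nr t *\<^sub>R T t"
  using nr_pos[of t] by (simp add: T_def)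

definition phi0 :: real where "phi0 = (SOME x. T a = ephi x)"
definition phi :: "real \<Rightarrow> real" where "phi t = integral {a..t} w + phi0"

lemma T_a: "T a = ephi phi0"
proof -
  have "(T a $ 1)^2 + (T a $ 2)^2 = 1" using norm_T[of a] ab norm2sq[of "T a"] by simp
  then obtain x where "T a $ 1 = cos x" "T a $ 2 = sin x" by (rule sincos_total_2pi)
  hence "T a = ephi x" by (simp add: vec2_eq)
  hence "\<exists>x. T a = ephi x" by blast
  thus ?thesis unfolding phi0_def by (rule someI_ex)
qed

lemma dphi: "t \<in> {a..b} \<Longrightarrow> (phi has_real_derivative w t) (at t within {a..b})"
  unfolding phi_def[abs_def] has_real_derivative_iff_has_vector_derivative has_vector_derivative_add_const
  by (rule integral_has_vector_derivative[OF cont_w])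

lemma phi_a: "phi a = phi0" by (simp add: phi_def)

lemma T_ephi: "t \<in> {a..b} \<Longrightarrow> T t = ephi (phi t)"
proof -
  assume t: "t \<in> {a..b}"
  define E where "E x = inner (T x) (ephi (phi x))" for x
  have dE: "(E has_real_derivative 0) (at x within {a..t})" if x: "x \<in> {a..t}" for x
  proof -
    have xab: "x \<in> {a..b}" using x t by auto
    have sub: "{a..t} \<subseteq> {a..b}" using t by auto
    have "(E has_vector_derivative (inner (T x) (w x *\<^sub>R rot90 (ephi (phi x))) + inner (w x *\<^sub>R rot90 (T x)) (ephi (phi x)))) (at x within {a..b})"
      unfolding E_def[abs_def]
      by (rule bounded_bilinear.has_vector_derivative[OF bounded_bilinear_inner dT[OF xab] d_ephi[OF dphi[OF xab]]])
    moreover have "inner (T x) (w x *\<^sub>R rot90 (ephi (phi x))) + inner (w x *\<^sub>R rot90 (T x)) (ephi (phi x)) = 0"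
      using inner_rot90_swap[of "T x" "ephi (phi x)"] by (simp add: distrib_left[symmetric])
    ultimately show ?thesis
      unfolding has_real_derivative_iff_has_vector_derivative
      using has_vector_derivative_within_subset[OF _ sub] by auto
  qed
  have "E t = E a" by (rule deriv_zero_const) (use t dE in auto)
  moreover have "E a = 1" using T_a by (simp add: E_def phi_a power2_norm_eq_inner[symmetric])
  ultimately have "inner (T t) (ephi (phi t)) = 1" by (simp add: E_def)
  thus ?thesis using norm_T[OF t] by (intro unit_eq_by_inner) auto
qed

lemma dg: "t \<in> {a..b} \<Longrightarrow> (\<gamma> has_vector_derivative (nr t *\<^sub>R T t)) (at t within {a..b})"
  using d1 g1_eq by simp

lemma s_mono: "a \<le> u \<Longrightarrow> u \<le> v \<Longrightarrow> v \<le> b \<Longrightarrow> s u \<le> s v"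
  using deriv_cmp_sub[of a u v b "\<lambda>_. 0" "\<lambda>_. 0" s nr] ds nr_pos
  by (fastforce intro: less_imp_le)

lemma phi_mono: "a \<le> u \<Longrightarrow> u \<le> v \<Longrightarrow> v \<le> b \<Longrightarrow> phi u \<le> phi v"
  using deriv_cmp_sub[of a u v b "\<lambda>_. 0" "\<lambda>_. 0" phi w] dphi w_pos
  by (fastforce intro: less_imp_le)

lemma s_a: "s a = 0" by (simp add: s_def)

lemma phi_total: "phi b - phi a \<le> pi"
  using total_curv by (simp add: phi_def w_def[abs_def])

lemma phi_range: "a \<le> u \<Longrightarrow> u \<le> v \<Longrightarrow> v \<le> b \<Longrightarrow> phi v - phi u \<le> pi"
  using phi_mono[of a u] phi_mono[of v b] phi_total ab by fastforce

lemma s_range: "a \<le> u \<Longrightarrow> u \<le> v \<Longrightarrow> v \<le> b \<Longrightarrow> s v - s u \<le> s b"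
  using s_mono[of a u] s_mono[of v b] s_a ab by fastforce

lemma chord: "a \<le> u \<Longrightarrow> u \<le> v \<Longrightarrow> v \<le> b \<Longrightarrow> norm (\<gamma> v - \<gamma> u) \<le> s v - s u"
  by (rule deriv_norm_cmp_sub[of a u v b \<gamma> "\<lambda>t. nr t *\<^sub>R T t" s nr])
     (use dg ds nr_pos norm_T in \<open>auto simp: less_imp_le\<close>)

lemma T_lip: "a \<le> u \<Longrightarrow> u \<le> v \<Longrightarrow> v \<le> b \<Longrightarrow> norm (T v - T u) \<le> (s v - s u) / R1"
proof -
  assume uv: "a \<le> u" "u \<le> v" "v \<le> b"
  have "norm (T v - T u) \<le> s v / R1 - s u / R1"
  proof (rule deriv_norm_cmp_sub[of a u v b T "\<lambda>t. w t *\<^sub>R rot90 (T t)" "\<lambda>t. s t / R1" "\<lambda>t. nr t / R1"])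
    show "(T has_vector_derivative w x *\<^sub>R rot90 (T x)) (at x within {a..b})" if "x \<in> {a..b}" for x
      using dT that by simp
    show "((\<lambda>t. s t / R1) has_real_derivative nr x / R1) (at x within {a..b})" if "x \<in> {a..b}" for x
      using ds[OF that] by (intro DERIV_cdivide)
    show "norm (w x *\<^sub>R rot90 (T x)) \<le> nr x / R1" if "x \<in> {u..v}" for x
    proof -
      have x: "x \<in> {a..b}" using that uv by auto
      have "norm (w x *\<^sub>R rot90 (T x)) = w x" using norm_T[OF x] w_pos[OF x] by simp
      also have "\<dots> \<le> nr x / R1" using nr_ge[OF x] R1pos by (simp add: le_divide_eq mult.commute)
      finally show ?thesis .
    qed
  qed (use uv in auto)
  thus ?thesis by (simp add: diff_divide_distrib)
qed

lemma cross_T_le: "a \<le> u \<Longrightarrow> u \<le> b \<Longrightarrow> a \<le> v \<Longrightarrow> v \<le> b \<Longrightarrow> \<bar>cross2 (T u) (T v)\<bar> \<le> norm (T v - T u)"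
proof -
  assume "a \<le> u" "u \<le> b" "a \<le> v" "v \<le> b"
  hence n: "norm (T u) = 1" using norm_T by auto
  have "cross2 (T u) (T v) = cross2 (T u) (T v - T u)" by (simp add: cross2_diff_right)
  also have "\<bar>\<dots>\<bar> \<le> norm (T u) * norm (T v - T u)" by (rule abs_cross2_le)
  finally show ?thesis using n by simp
qed

lemma H_bound:
  assumes "a \<le> t1" "t1 \<le> t2" "t2 \<le> b"
  shows "\<bar>cross2 (\<gamma> t2 - \<gamma> t1) (T t2)\<bar> \<le> (s t2 - s t1)^2 / (2 * R1)"
proof -
  define f where "f u = cross2 (\<gamma> t2 - \<gamma> u) (T t2)" for u
  define g where "g u = - ((s t2 - s u)^2 / (2 * R1))" for u
  have "norm (f t2 - f t1) \<le> g t2 - g t1"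
  proof (rule deriv_norm_cmp_sub[of a t1 t2 b f "\<lambda>u. - cross2 (nr u *\<^sub>R T u) (T t2)" g "\<lambda>u. (s t2 - s u) * nr u / R1"])
    show "(f has_vector_derivative - cross2 (nr x *\<^sub>R T x) (T t2)) (at x within {a..b})" if x: "x \<in> {a..b}" for x
    proof -
      have "((\<lambda>u. cross2 (\<gamma> t2 - \<gamma> u) (T t2)) has_real_derivative cross2 (0 - nr x *\<^sub>R T x) (T t2)) (at x within {a..b})"
        by (intro d_cross_left has_vector_derivative_diff has_vector_derivative_const dg x)
      thus ?thesis by (simp add: f_def[abs_def] has_real_derivative_iff_has_vector_derivative cross2_def)
    qed
    show "(g has_real_derivative (s t2 - s x) * nr x / R1) (at x within {a..b})" if x: "x \<in> {a..b}" for x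
      unfolding g_def[abs_def]
      using R1pos by (auto intro!: derivative_eq_intros ds[OF x] simp: field_simps power2_eq_square)
    show "norm (- cross2 (nr x *\<^sub>R T x) (T t2)) \<le> (s t2 - s x) * nr x / R1" if x: "x \<in> {t1..t2}" for x
    proof -
      have xab: "a \<le> x" "x \<le> b" using x assms by auto
      have "norm (- cross2 (nr x *\<^sub>R T x) (T t2)) = nr x * \<bar>cross2 (T x) (T t2)\<bar>"
        using nr_pos[of x] xab by (simp add: cross2_scale_left abs_mult)
      also have "\<dots> \<le> nr x * ((s t2 - s x) / R1)"
        using cross_T_le[of x t2] T_lip[of x t2] xab x assms nr_pos[of x]
        by (intro mult_left_mono) auto
      finally show ?thesis by (simp add: mult.commute)
    qed
  qed (use assms in auto)
  moreover have "f t2 = 0" by (simp add: f_def cross2_def)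
  ultimately show ?thesis by (simp add: f_def g_def)
qed

lemma tri_bound:
  assumes "a \<le> t1" "t1 \<le> t2" "t2 \<le> t3" "t3 \<le> b"
  shows "\<bar>cross2 (\<gamma> t2 - \<gamma> t1) (\<gamma> t3 - \<gamma> t2)\<bar>
      \<le> (s t2 - s t1) * (s t3 - s t2) * ((s t2 - s t1) + (s t3 - s t2)) / (2 * R1)"
proof -
  define A where "A = s t2 - s t1"
  define V where "V = \<gamma> t2 - \<gamma> t1"
  have A0: "A \<ge> 0" using s_mono assms by (simp add: A_def)
  have VA: "norm V \<le> A" using chord assms by (simp add: V_def A_def)
  have HV: "\<bar>cross2 V (T t2)\<bar> \<le> A^2 / (2 * R1)" using H_bound assms by (simp add: V_def A_def)
  define f where "f u = cross2 V (\<gamma> u - \<gamma> t2)" for u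
  define g where "g u = (A * (s u - s t2)^2 / 2 + A^2 * (s u - s t2) / 2) / R1" for u
  have "norm (f t3 - f t2) \<le> g t3 - g t2"
  proof (rule deriv_norm_cmp_sub[of a t2 t3 b f "\<lambda>u. cross2 V (nr u *\<^sub>R T u)" g "\<lambda>u. nr u * (A * (s u - s t2) + A^2 / 2) / R1"])
    show "(f has_vector_derivative cross2 V (nr x *\<^sub>R T x)) (at x within {a..b})" if x: "x \<in> {a..b}" for x
    proof -
      have "((\<lambda>u. cross2 V (\<gamma> u - \<gamma> t2)) has_real_derivative cross2 V (nr x *\<^sub>R T x - 0)) (at x within {a..b})"
        by (intro d_cross_right has_vector_derivative_diff has_vector_derivative_const dg x)
      thus ?thesis by (simp add: f_def[abs_def] has_real_derivative_iff_has_vector_derivative)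
    qed
    show "(g has_real_derivative nr x * (A * (s x - s t2) + A^2 / 2) / R1) (at x within {a..b})" if x: "x \<in> {a..b}" for x
      unfolding g_def[abs_def]
      using R1pos by (auto intro!: derivative_eq_intros ds[OF x] simp: field_simps power2_eq_square)
    show "norm (cross2 V (nr x *\<^sub>R T x)) \<le> nr x * (A * (s x - s t2) + A^2 / 2) / R1" if x: "x \<in> {t2..t3}" for x
    proof -
      have xab: "a \<le> x" "x \<le> b" using x assms by auto
      have "cross2 V (T x) = cross2 V (T x - T t2) + cross2 V (T t2)" by (simp add: cross2_diff_right)
      hence "\<bar>cross2 V (T x)\<bar> \<le> \<bar>cross2 V (T x - T t2)\<bar> + \<bar>cross2 V (T t2)\<bar>" by linarith
      also have "\<bar>cross2 V (T x - T t2)\<bar> \<le> norm V * norm (T x - T t2)" by (rule abs_cross2_le)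
      also have "norm V * norm (T x - T t2) \<le> A * ((s x - s t2) / R1)"
        using VA T_lip[of t2 x] x assms A0 by (intro mult_mono) auto
      finally have "\<bar>cross2 V (T x)\<bar> \<le> A * ((s x - s t2) / R1) + A^2 / (2 * R1)" using HV by linarith
      also have "\<dots> = (A * (s x - s t2) + A^2 / 2) / R1" using R1pos by (simp add: field_simps)
      finally have c: "\<bar>cross2 V (T x)\<bar> \<le> (A * (s x - s t2) + A^2 / 2) / R1" .
      have "norm (cross2 V (nr x *\<^sub>R T x)) = nr x * \<bar>cross2 V (T x)\<bar>"
        using nr_pos[of x] xab by (simp add: cross2_scale_right abs_mult)
      also have "\<dots> \<le> nr x * ((A * (s x - s t2) + A^2 / 2) / R1)"
        using c nr_pos[of x] xab by (intro mult_left_mono) auto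
      finally show ?thesis by simp
    qed
  qed (use assms in auto)
  moreover have "f t2 = 0" by (simp add: f_def cross2_def)
  moreover have "f t3 = cross2 (\<gamma> t2 - \<gamma> t1) (\<gamma> t3 - \<gamma> t2)" by (simp add: f_def V_def)
  moreover have "g t3 - g t2 = (s t2 - s t1) * (s t3 - s t2) * ((s t2 - s t1) + (s t3 - s t2)) / (2 * R1)"
    using R1pos by (simp add: g_def A_def field_simps power2_eq_square)
  ultimately show ?thesis by simp
qed

end


lemma cos_nonpos_A: "pi/2 \<le> x \<Longrightarrow> x \<le> 3/2*pi \<Longrightarrow> cos x \<le> 0"
  using cos_ge_zero[of "x - pi"] by simp

lemma cos_nonneg_B: "3/2*pi \<le> x \<Longrightarrow> x \<le> 5/2*pi \<Longrightarrow> 0 \<le> cos x"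
  using cos_ge_zero[of "x - 2*pi"] cos_periodic[of "x - 2*pi"] by simp

lemma cos_nonpos_C: "-(3/2*pi) \<le> x \<Longrightarrow> x \<le> -(pi/2) \<Longrightarrow> cos x \<le> 0"
  using cos_ge_zero[of "x + pi"] by simp

lemma cos_nonneg_D: "-(5/2*pi) \<le> x \<Longrightarrow> x \<le> -(3/2*pi) \<Longrightarrow> 0 \<le> cos x"
  using cos_ge_zero[of "x + 2*pi"] by simp

lemma sin_fwd: "pi/2 \<le> c \<Longrightarrow> c \<le> 3/2*pi \<Longrightarrow> 3/2*pi \<le> z \<Longrightarrow> z \<le> c + pi \<Longrightarrow> sin z \<le> - sin c"
proof -
  assume h: "pi/2 \<le> c" "c \<le> 3/2*pi" "3/2*pi \<le> z" "z \<le> c + pi"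
  have "sin (z - 2*pi) \<le> sin (c - pi)" by (rule sin_monotone_2pi_le) (use h in auto)
  moreover have "sin z = sin (z - 2*pi)" using sin_periodic[of "z - 2*pi"] by simp
  ultimately show ?thesis by simp
qed

lemma sin_bwd: "-(pi/2) \<le> c \<Longrightarrow> c \<le> pi/2 \<Longrightarrow> c - pi \<le> z \<Longrightarrow> z \<le> -(pi/2) \<Longrightarrow> sin z \<le> - sin c"
proof -
  assume h: "-(pi/2) \<le> c" "c \<le> pi/2" "c - pi \<le> z" "z \<le> -(pi/2)"
  have "sin c \<le> sin (z + pi)" by (rule sin_monotone_2pi_le) (use h in auto)
  thus ?thesis by simp
qed

lemma sin_m32: "sin (-(3/2*pi)) = 1"
  by (subst sin_minus, subst sin_3over2_pi) simp
lemma sin_m12: "sin (-(pi/2)) = -1" by simp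

lemma y_mono_gen:
  fixes y \<omega> :: "real \<Rightarrow> real"
  assumes dy: "\<And>x. x \<in> {a..b} \<Longrightarrow> (y has_real_derivative \<omega> x) (at x within {a..b})"
    and pos: "\<And>x. x \<in> {a..b} \<Longrightarrow> 0 \<le> \<omega> x"
    and "a \<le> p" "p \<le> q" "q \<le> b"
  shows "y p \<le> y q"
  using deriv_cmp_sub[of a p q b "\<lambda>_. 0" "\<lambda>_. 0" y \<omega>] dy pos assms by force

lemma scalar_fwd:
  fixes f y \<nu> \<omega> :: "real \<Rightarrow> real" and R c :: real
  assumes tt: "a \<le> t0" "t0 \<le> t" "t \<le> b"
    and df: "\<And>x. x \<in> {a..b} \<Longrightarrow> (f has_real_derivative \<nu> x * cos (y x)) (at x within {a..b})"
    and dy: "\<And>x. x \<in> {a..b} \<Longrightarrow> (y has_real_derivative \<omega> x) (at x within {a..b})"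
    and pos: "\<And>x. x \<in> {a..b} \<Longrightarrow> 0 \<le> \<nu> x \<and> 0 \<le> \<omega> x \<and> \<nu> x \<le> R * \<omega> x"
    and R: "0 \<le> R"
    and yc: "y t0 = c" "-(pi/2) \<le> c" "c \<le> 3/2*pi" "y t \<le> c + pi"
  shows "f t - f t0 \<le> R * (1 - sin c)"
proof -
  have ymono: "y p \<le> y q" if "a \<le> p" "p \<le> q" "q \<le> b" for p q
    by (rule y_mono_gen[OF dy]) (use pos that in auto)
  have ycont: "continuous_on {t0..t} y"
  proof -
    have "continuous_on {a..b} y"
      by (rule continuous_on_vector_derivative) (use dy in \<open>auto simp: has_real_derivative_iff_has_vector_derivative\<close>)
    thus ?thesis by (rule continuous_on_subset) (use tt in auto)
  qed
  have M0: "f q - f p \<le> 0" if "t0 \<le> p" "p \<le> q" "q \<le> t" "\<And>x. x \<in> {p..q} \<Longrightarrow> cos (y x) \<le> 0" for p q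
  proof -
    have "f q - f p \<le> (\<lambda>_. 0) q - (\<lambda>_. 0::real) p"
    proof (rule deriv_cmp_sub[of a p q b f "\<lambda>x. \<nu> x * cos (y x)" "\<lambda>_. 0" "\<lambda>_. 0"])
      show "\<nu> x * cos (y x) \<le> 0" if "x \<in> {p..q}" for x
        using pos[of x] that \<open>\<And>x. x \<in> {p..q} \<Longrightarrow> cos (y x) \<le> 0\<close>[of x] \<open>t0 \<le> p\<close> \<open>q \<le> t\<close> tt
        by (intro mult_nonneg_nonpos) auto
    qed (use that tt df in auto)
    thus ?thesis by simp
  qed
  have M1: "f q - f p \<le> R * sin (y q) - R * sin (y p)" if "t0 \<le> p" "p \<le> q" "q \<le> t" "\<And>x. x \<in> {p..q} \<Longrightarrow> 0 \<le> cos (y x)" for p q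
  proof (rule deriv_cmp_sub[of a p q b f "\<lambda>x. \<nu> x * cos (y x)" "\<lambda>x. R * sin (y x)" "\<lambda>x. R * (cos (y x) * \<omega> x)"])
    show "((\<lambda>x. R * sin (y x)) has_real_derivative R * (cos (y x) * \<omega> x)) (at x within {a..b})" if "x \<in> {a..b}" for x
      by (intro DERIV_cmult DERIV_sin[THEN DERIV_chain2] dy that)
    show "\<nu> x * cos (y x) \<le> R * (cos (y x) * \<omega> x)" if "x \<in> {p..q}" for x
    proof -
      have "x \<in> {a..b}" using that \<open>t0 \<le> p\<close> \<open>q \<le> t\<close> tt by auto
      hence "\<nu> x * cos (y x) \<le> (R * \<omega> x) * cos (y x)"
        using pos[of x] \<open>\<And>x. x \<in> {p..q} \<Longrightarrow> 0 \<le> cos (y x)\<close>[OF that] by (intro mult_right_mono) auto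
      thus ?thesis by (simp add: algebra_simps)
    qed
  qed (use that tt df in auto)
  have yr: "c \<le> y x \<and> y x \<le> c + pi" if "x \<in> {t0..t}" for x
    using ymono[of t0 x] ymono[of x t] that tt yc by auto
  show ?thesis
  proof (cases "c \<le> pi/2")
    case True
    show ?thesis
    proof (cases "y t \<le> pi/2")
      case True
      have "f t - f t0 \<le> R * sin (y t) - R * sin (y t0)"
      proof (rule M1)
        show "0 \<le> cos (y x)" if "x \<in> {t0..t}" for x
          using yr[OF that] ymono[of x t] that tt True yc by (intro cos_ge_zero) auto
      qed (use tt in auto)
      moreover have "R * sin (y t) \<le> R" using R by (simp add: mult_left_le)
      ultimately show ?thesis using yc by (simp add: algebra_simps)
    next
      case False
      obtain \<tau> where tau: "t0 \<le> \<tau>" "\<tau> \<le> t" "y \<tau> = pi/2"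
        using IVT'[of y t0 "pi/2" t] ycont yc \<open>c \<le> pi/2\<close> False tt by auto
      have "f \<tau> - f t0 \<le> R * sin (y \<tau>) - R * sin (y t0)"
      proof (rule M1)
        show "0 \<le> cos (y x)" if "x \<in> {t0..\<tau>}" for x
          using yr[of x] ymono[of x \<tau>] that tt tau yc by (intro cos_ge_zero) auto
      qed (use tau in auto)
      moreover have "f t - f \<tau> \<le> 0"
      proof (rule M0)
        show "cos (y x) \<le> 0" if "x \<in> {\<tau>..t}" for x
          using yr[of x] ymono[of \<tau> x] that tt tau yc \<open>c \<le> pi/2\<close> by (intro cos_nonpos_A) auto
      qed (use tau in auto)
      ultimately show ?thesis using tau yc by (simp add: algebra_simps)
    qed
  next
    case False
    show ?thesis
    proof (cases "y t \<le> 3/2*pi")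
      case True
      have "f t - f t0 \<le> 0"
      proof (rule M0)
        show "cos (y x) \<le> 0" if "x \<in> {t0..t}" for x
          using yr[OF that] ymono[of x t] that tt True yc False by (intro cos_nonpos_A) auto
      qed (use tt in auto)
      moreover have "0 \<le> R * (1 - sin c)" using R by simp
      ultimately show ?thesis by linarith
    next
      case False2: False
      obtain \<tau> where tau: "t0 \<le> \<tau>" "\<tau> \<le> t" "y \<tau> = 3/2*pi"
        using IVT'[of y t0 "3/2*pi" t] ycont yc False2 tt by auto
      have "f \<tau> - f t0 \<le> 0"
      proof (rule M0)
        show "cos (y x) \<le> 0" if "x \<in> {t0..\<tau>}" for x
          using yr[of x] ymono[of x \<tau>] that tt tau yc False by (intro cos_nonpos_A) auto
      qed (use tau in auto)
      moreover have "f t - f \<tau> \<le> R * sin (y t) - R * sin (y \<tau>)"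
      proof (rule M1)
        show "0 \<le> cos (y x)" if "x \<in> {\<tau>..t}" for x
          using yr[of x] ymono[of \<tau> x] that tt tau yc by (intro cos_nonneg_B) auto
      qed (use tau in auto)
      moreover have "sin (y t) \<le> - sin c" using sin_fwd[of c "y t"] False yc False2 by auto
      hence "R * sin (y t) \<le> R * (- sin c)" using R by (intro mult_left_mono) auto
      moreover have "sin (y \<tau>) = -1" by (simp only: tau(3) sin_3over2_pi)
      ultimately show ?thesis by (simp add: algebra_simps)
    qed
  qed
qed

lemma scalar_bwd:
  fixes f y \<nu> \<omega> :: "real \<Rightarrow> real" and R c :: real
  assumes tt: "a \<le> t" "t \<le> t0" "t0 \<le> b"
    and df: "\<And>x. x \<in> {a..b} \<Longrightarrow> (f has_real_derivative \<nu> x * cos (y x)) (at x within {a..b})"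
    and dy: "\<And>x. x \<in> {a..b} \<Longrightarrow> (y has_real_derivative \<omega> x) (at x within {a..b})"
    and pos: "\<And>x. x \<in> {a..b} \<Longrightarrow> 0 \<le> \<nu> x \<and> 0 \<le> \<omega> x \<and> \<nu> x \<le> R * \<omega> x"
    and R: "0 \<le> R"
    and yc: "y t0 = c" "-(3/2*pi) \<le> c" "c \<le> pi/2" "c - pi \<le> y t"
  shows "f t - f t0 \<le> R * (1 - sin c)"
proof -
  have ymono: "y p \<le> y q" if "a \<le> p" "p \<le> q" "q \<le> b" for p q
    by (rule y_mono_gen[OF dy]) (use pos that in auto)
  have ycont: "continuous_on {t..t0} y"
  proof -
    have "continuous_on {a..b} y"
      by (rule continuous_on_vector_derivative) (use dy in \<open>auto simp: has_real_derivative_iff_has_vector_derivative\<close>)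
    thus ?thesis by (rule continuous_on_subset) (use tt in auto)
  qed
  have M0: "f p - f q \<le> 0" if "t \<le> p" "p \<le> q" "q \<le> t0" "\<And>x. x \<in> {p..q} \<Longrightarrow> 0 \<le> cos (y x)" for p q
  proof -
    have "(\<lambda>_. 0) q - (\<lambda>_. 0::real) p \<le> f q - f p"
    proof (rule deriv_cmp_sub[of a p q b "\<lambda>_. 0" "\<lambda>_. 0" f "\<lambda>x. \<nu> x * cos (y x)"])
      show "0 \<le> \<nu> x * cos (y x)" if "x \<in> {p..q}" for x
        using pos[of x] that \<open>\<And>x. x \<in> {p..q} \<Longrightarrow> 0 \<le> cos (y x)\<close>[of x] \<open>t \<le> p\<close> \<open>q \<le> t0\<close> tt
        by (intro mult_nonneg_nonneg) auto
    qed (use that tt df in auto)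
    thus ?thesis by simp
  qed
  have M1: "f p - f q \<le> R * sin (y p) - R * sin (y q)" if "t \<le> p" "p \<le> q" "q \<le> t0" "\<And>x. x \<in> {p..q} \<Longrightarrow> cos (y x) \<le> 0" for p q
  proof -
    have "R * sin (y q) - R * sin (y p) \<le> f q - f p"
    proof (rule deriv_cmp_sub[of a p q b "\<lambda>x. R * sin (y x)" "\<lambda>x. R * (cos (y x) * \<omega> x)" f "\<lambda>x. \<nu> x * cos (y x)"])
      show "((\<lambda>x. R * sin (y x)) has_real_derivative R * (cos (y x) * \<omega> x)) (at x within {a..b})" if "x \<in> {a..b}" for x
        by (intro DERIV_cmult DERIV_sin[THEN DERIV_chain2] dy that)
      show "R * (cos (y x) * \<omega> x) \<le> \<nu> x * cos (y x)" if "x \<in> {p..q}" for x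
      proof -
        have "x \<in> {a..b}" using that \<open>t \<le> p\<close> \<open>q \<le> t0\<close> tt by auto
        hence "(R * \<omega> x) * cos (y x) \<le> \<nu> x * cos (y x)"
          using pos[of x] \<open>\<And>x. x \<in> {p..q} \<Longrightarrow> cos (y x) \<le> 0\<close>[OF that] by (intro mult_right_mono_neg) auto
        thus ?thesis by (simp add: algebra_simps)
      qed
    qed (use that tt df in auto)
    thus ?thesis by simp
  qed
  have yr: "c - pi \<le> y x \<and> y x \<le> c" if "x \<in> {t..t0}" for x
    using ymono[of t x] ymono[of x t0] that tt yc by auto
  show ?thesis
  proof (cases "-(pi/2) \<le> c")
    case True
    show ?thesis
    proof (cases "-(pi/2) \<le> y t")
      case True2: True
      have "f t - f t0 \<le> 0"
      proof (rule M0)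
        show "0 \<le> cos (y x)" if "x \<in> {t..t0}" for x
          using yr[OF that] ymono[of t x] that tt True2 yc by (intro cos_ge_zero) auto
      qed (use tt in auto)
      moreover have "0 \<le> R * (1 - sin c)" using R by simp
      ultimately show ?thesis by linarith
    next
      case False
      obtain \<tau> where tau: "t \<le> \<tau>" "\<tau> \<le> t0" "y \<tau> = -(pi/2)"
        using IVT'[of y t "-(pi/2)" t0] ycont yc True False tt by auto
      have "f \<tau> - f t0 \<le> 0"
      proof (rule M0)
        show "0 \<le> cos (y x)" if "x \<in> {\<tau>..t0}" for x
          using yr[of x] ymono[of \<tau> x] that tt tau yc by (intro cos_ge_zero) auto
      qed (use tau in auto)
      moreover have "f t - f \<tau> \<le> R * sin (y t) - R * sin (y \<tau>)"
      proof (rule M1)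
        show "cos (y x) \<le> 0" if "x \<in> {t..\<tau>}" for x
          using yr[of x] ymono[of x \<tau>] that tt tau yc \<open>-(pi/2) \<le> c\<close> by (intro cos_nonpos_C) auto
      qed (use tau in auto)
      moreover have "sin (y t) \<le> - sin c" using sin_bwd[of c "y t"] True False yc by auto
      hence "R * sin (y t) \<le> R * (- sin c)" using R by (intro mult_left_mono) auto
      ultimately show ?thesis using tau sin_m12 by (simp add: algebra_simps)
    qed
  next
    case False
    show ?thesis
    proof (cases "-(3/2*pi) \<le> y t")
      case True
      have "f t - f t0 \<le> R * sin (y t) - R * sin (y t0)"
      proof (rule M1)
        show "cos (y x) \<le> 0" if "x \<in> {t..t0}" for x
          using yr[OF that] ymono[of t x] that tt True yc False by (intro cos_nonpos_C) auto
      qed (use tt in auto)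
      moreover have "R * sin (y t) \<le> R" using R by (simp add: mult_left_le)
      ultimately show ?thesis using yc by (simp add: algebra_simps)
    next
      case False2: False
      obtain \<tau> where tau: "t \<le> \<tau>" "\<tau> \<le> t0" "y \<tau> = -(3/2*pi)"
        using IVT'[of y t "-(3/2*pi)" t0] ycont yc False2 tt by auto
      have "f \<tau> - f t0 \<le> R * sin (y \<tau>) - R * sin (y t0)"
      proof (rule M1)
        show "cos (y x) \<le> 0" if "x \<in> {\<tau>..t0}" for x
          using yr[of x] ymono[of \<tau> x] that tt tau yc False by (intro cos_nonpos_C) auto
      qed (use tau in auto)
      moreover have "f t - f \<tau> \<le> 0"
      proof (rule M0)
        show "0 \<le> cos (y x)" if "x \<in> {t..\<tau>}" for x
          using yr[of x] ymono[of x \<tau>] that tt tau yc by (intro cos_nonneg_D) auto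
      qed (use tau in auto)
      ultimately show ?thesis using tau yc sin_m32 by (simp add: algebra_simps)
    qed
  qed
qed



lemma ephi_rot: "ephi x = cos (x - z) *\<^sub>R ephi z + sin (x - z) *\<^sub>R rot90 (ephi z)"
proof -
  have "cos x = cos (x - z) * cos z - sin (x - z) * sin z" using cos_add[of "x - z" z] by simp
  moreover have "sin x = sin (x - z) * cos z + cos (x - z) * sin z" using sin_add[of "x - z" z] by simp
  ultimately show ?thesis unfolding vec2_eq by (simp add: algebra_simps)
qed

lemma frame_sq: "norm e = 1 \<Longrightarrow> (inner u e)^2 + (inner u (rot90 e))^2 = (norm u)^2"
  using lagrange2[of e u] by (simp add: inner_commute[of u] inner_rot90)

context curve begin

lemma R2pos: "0 < R2" using R1pos R12 by simp

lemma inner_u_T: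
  assumes "t0 \<in> {a..b}" "\<tau> \<in> {a..b}" "cos c = inner u (T t0)" "sin c = - inner u (rot90 (T t0))"
  shows "inner u (T \<tau>) = cos (phi \<tau> - phi t0 + c)"
proof -
  have "T \<tau> = cos (phi \<tau> - phi t0) *\<^sub>R T t0 + sin (phi \<tau> - phi t0) *\<^sub>R rot90 (T t0)"
    using T_ephi[OF assms(1)] T_ephi[OF assms(2)] ephi_rot by simp
  hence "inner u (T \<tau>) = cos (phi \<tau> - phi t0) * cos c - sin (phi \<tau> - phi t0) * sin c"
    using assms(3,4) by (simp add: inner_add_right)
  thus ?thesis by (simp add: cos_add)
qed

lemma disk_u:
  assumes t0: "t0 \<in> {a..b}" and t: "t \<in> {a..b}" and u: "norm u = 1"
  shows "inner u (\<gamma> t - \<gamma> t0) \<le> R2 * (1 + inner u (rot90 (T t0)))"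
proof -
  define p where "p = inner u (T t0)"
  define q where "q = inner u (rot90 (T t0))"
  have "p^2 + (-q)^2 = 1" using frame_sq[OF norm_T[OF t0], of u] u by (simp add: p_def q_def)
  then obtain c0 where c0: "0 \<le> c0" "c0 < 2*pi" "p = cos c0" "-q = sin c0" by (rule sincos_total_2pi)
  define f where "f x = inner u (\<gamma> x)" for x
  have df: "(f has_real_derivative nr x * cos (phi x - phi t0 + c)) (at x within {a..b})"
    if x: "x \<in> {a..b}" and cc: "cos c = p" "sin c = -q" for x c
  proof -
    have "(f has_vector_derivative (inner u (nr x *\<^sub>R T x) + inner 0 (\<gamma> x))) (at x within {a..b})"
      unfolding f_def[abs_def]
      by (rule bounded_bilinear.has_vector_derivative[OF bounded_bilinear_inner has_vector_derivative_const dg[OF x]])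
    moreover have "inner u (T x) = cos (phi x - phi t0 + c)"
      by (rule inner_u_T[OF t0 x]) (use cc in \<open>simp_all add: p_def q_def\<close>)
    ultimately show ?thesis by (simp add: has_real_derivative_iff_has_vector_derivative)
  qed
  have dy: "((\<lambda>x. phi x - phi t0 + c) has_real_derivative w x) (at x within {a..b})" if x: "x \<in> {a..b}" for x c
    using dphi[OF x] by (auto intro!: derivative_eq_intros)
  have pos: "0 \<le> nr x \<and> 0 \<le> w x \<and> nr x \<le> R2 * w x" if "x \<in> {a..b}" for x
    using nr_pos[OF that] w_pos[OF that] nr_le[OF that] by auto
  show ?thesis
  proof (cases "t0 \<le> t")
    case True
    define c where "c = (if c0 \<le> 3/2*pi then c0 else c0 - 2*pi)"
    have cc: "cos c = p" "sin c = -q"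
      using c0 cos_periodic[of "c0 - 2*pi"] sin_periodic[of "c0 - 2*pi"] by (auto simp: c_def)
    have cr: "-(pi/2) \<le> c" "c \<le> 3/2*pi" using c0 by (auto simp: c_def)
    have "f t - f t0 \<le> R2 * (1 - sin c)"
    proof (rule scalar_fwd[where y="\<lambda>x. phi x - phi t0 + c" and \<nu>=nr and \<omega>=w and f=f and a=a and b=b and t=t and t0=t0 and R=R2 and c=c])
    qed (use t0 t True df cc dy pos R2pos cr phi_range[of t0 t] in auto)
    thus ?thesis using cc by (simp add: f_def q_def inner_diff_right)
  next
    case False
    define c where "c = (if c0 \<le> pi/2 then c0 else c0 - 2*pi)"
    have cc: "cos c = p" "sin c = -q"
      using c0 cos_periodic[of "c0 - 2*pi"] sin_periodic[of "c0 - 2*pi"] by (auto simp: c_def)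
    have cr: "-(3/2*pi) \<le> c" "c \<le> pi/2" using c0 by (auto simp: c_def)
    have "f t - f t0 \<le> R2 * (1 - sin c)"
    proof (rule scalar_bwd[where y="\<lambda>x. phi x - phi t0 + c" and \<nu>=nr and \<omega>=w and f=f and a=a and b=b and t=t and t0=t0 and R=R2 and c=c])
    qed (use t0 t False df cc dy pos R2pos cr phi_range[of t t0] in auto)
    thus ?thesis using cc by (simp add: f_def q_def inner_diff_right)
  qed
qed

lemma disk:
  assumes t0: "t0 \<in> {a..b}" and t: "t \<in> {a..b}"
  shows "(norm (\<gamma> t - \<gamma> t0))^2 \<le> 2 * R2 * cross2 (T t0) (\<gamma> t - \<gamma> t0)"
proof -
  define V where "V = \<gamma> t - \<gamma> t0"
  define N where "N = rot90 (T t0)"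
  have nN: "norm N = 1" using norm_T[OF t0] by (simp add: N_def)
  have cr: "cross2 (T t0) V = inner N V" by (simp add: N_def inner_rot90)
  define Z where "Z = V - R2 *\<^sub>R N"
  have NN: "inner N N = 1" using nN by (simp add: power2_norm_eq_inner[symmetric])
  have "(norm Z)^2 = inner Z Z" by (simp add: power2_norm_eq_inner)
  also have "\<dots> = inner V V - 2 * R2 * inner N V + R2^2 * inner N N"
    by (simp add: Z_def inner_diff_left inner_diff_right inner_commute algebra_simps power2_eq_square)
  finally have Zsq: "(norm Z)^2 = (norm V)^2 - 2 * R2 * inner N V + R2^2"
    using NN by (simp add: power2_norm_eq_inner)
  have "(norm Z)^2 \<le> R2^2"
  proof (cases "Z = 0")
    case True thus ?thesis by simp
  next
    case False
    define u where "u = (1 / norm Z) *\<^sub>R Z"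
    have nu: "norm u = 1" using False by (simp add: u_def)
    have "inner u V \<le> R2 * (1 + inner u N)" using disk_u[OF t0 t nu] by (simp add: V_def N_def)
    hence "inner u Z \<le> R2" by (simp add: Z_def inner_diff_right algebra_simps)
    moreover have "inner u Z = norm Z" using False
      by (simp add: u_def power2_norm_eq_inner[symmetric] power2_eq_square)
    ultimately have "norm Z \<le> R2" by simp
    thus ?thesis by (intro power_mono) auto
  qed
  thus ?thesis using Zsq cr by (simp add: V_def)
qed

end


lemma cross_expand:
  "cross2 ((X2 + e2) - (X1 + e1)) ((X3 + e3) - (X1 + e1)) =
   cross2 (X2 - X1) (X3 - X1) + cross2 e1 (X2 - X3) + cross2 e2 (X3 - X1) + cross2 e3 (X1 - X2)
   + cross2 e1 e2 + cross2 e2 e3 + cross2 e3 e1"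
  by (simp add: cross2_def algebra_simps)

lemma lt_sq: "0 \<le> x \<Longrightarrow> x < d \<Longrightarrow> 0 \<le> y \<Longrightarrow> y < d \<Longrightarrow> x * y < d * d"
  for x y d :: real
  by (meson le_less_trans mult_strict_mono')

lemma perturb:
  fixes X1 X2 X3 Q1 Q2 Q3 :: "real^2"
  assumes "norm (Q1 - X1) < \<delta>" "norm (Q2 - X2) < \<delta>" "norm (Q3 - X3) < \<delta>"
  shows "\<bar>cross2 (Q2 - Q1) (Q3 - Q1)\<bar> < \<bar>cross2 (X2 - X1) (X3 - X1)\<bar>
          + \<delta> * (norm (X2 - X3) + norm (X3 - X1) + norm (X1 - X2)) + 3 * \<delta>^2"
proof -
  define e1 where "e1 = Q1 - X1"
  define e2 where "e2 = Q2 - X2"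
  define e3 where "e3 = Q3 - X3"
  have Q: "Q1 = X1 + e1" "Q2 = X2 + e2" "Q3 = X3 + e3" by (simp_all add: e1_def e2_def e3_def)
  have n: "norm e1 < \<delta>" "norm e2 < \<delta>" "norm e3 < \<delta>" using assms by (simp_all add: e1_def e2_def e3_def)
  have b1: "\<bar>cross2 e D\<bar> \<le> \<delta> * norm D" if "norm e < \<delta>" for e D
  proof -
    have "\<bar>cross2 e D\<bar> \<le> norm e * norm D" by (rule abs_cross2_le)
    also have "\<dots> \<le> \<delta> * norm D" using that by (intro mult_right_mono) auto
    finally show ?thesis .
  qed
  have b2: "\<bar>cross2 e f\<bar> < \<delta>^2" if "norm e < \<delta>" "norm f < \<delta>" for e f
  proof -
    have "\<bar>cross2 e f\<bar> \<le> norm e * norm f" by (rule abs_cross2_le)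
    also have "\<dots> < \<delta> * \<delta>" using that by (intro lt_sq) auto
    finally show ?thesis by (simp add: power2_eq_square)
  qed
  have "cross2 (Q2 - Q1) (Q3 - Q1) =
   cross2 (X2 - X1) (X3 - X1) + cross2 e1 (X2 - X3) + cross2 e2 (X3 - X1) + cross2 e3 (X1 - X2)
   + cross2 e1 e2 + cross2 e2 e3 + cross2 e3 e1"
    unfolding Q by (rule cross_expand)
  moreover note b1[OF n(1), of "X2 - X3"] b1[OF n(2), of "X3 - X1"] b1[OF n(3), of "X1 - X2"]
    b2[OF n(1) n(2)] b2[OF n(2) n(3)] b2[OF n(3) n(1)]
  ultimately show ?thesis
    using abs_ge_self[of "cross2 (X2 - X1) (X3 - X1)"] abs_ge_minus_self[of "cross2 (X2 - X1) (X3 - X1)"]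
      abs_ge_self[of "cross2 (Q2 - Q1) (Q3 - Q1)"] abs_ge_minus_self[of "cross2 (Q2 - Q1) (Q3 - Q1)"]
    unfolding abs_less_iff abs_le_iff by (simp add: distrib_left)
qed

definition FF :: "real^2 \<Rightarrow> real^2 \<Rightarrow> real^2 \<Rightarrow> real" where
  "FF Q1 Q2 Q3 = \<bar>cross2 (Q2 - Q1) (Q3 - Q1)\<bar>"

lemma FF_swap12: "FF Q1 Q2 Q3 = FF Q2 Q1 Q3"
proof -
  have "cross2 (Q1 - Q2) (Q3 - Q2) = - cross2 (Q2 - Q1) (Q3 - Q1)" by (simp add: cross2_def algebra_simps)
  thus ?thesis by (simp add: FF_def)
qed

lemma FF_swap23: "FF Q1 Q2 Q3 = FF Q1 Q3 Q2"
  unfolding FF_def by (subst cross2_anti) simp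

lemma sort3:
  fixes P :: "real \<Rightarrow> real \<Rightarrow> real \<Rightarrow> 'a \<Rightarrow> 'a \<Rightarrow> 'a \<Rightarrow> bool"
  assumes sorted: "\<And>t1 t2 t3 q1 q2 q3. t1 \<le> t2 \<Longrightarrow> t2 \<le> t3 \<Longrightarrow> P t1 t2 t3 q1 q2 q3"
    and s12: "\<And>t1 t2 t3 q1 q2 q3. P t2 t1 t3 q2 q1 q3 \<Longrightarrow> P t1 t2 t3 q1 q2 q3"
    and s23: "\<And>t1 t2 t3 q1 q2 q3. P t1 t3 t2 q1 q3 q2 \<Longrightarrow> P t1 t2 t3 q1 q2 q3"
  shows "P t1 t2 t3 q1 q2 q3"
proof -
  consider "t1 \<le> t2" "t2 \<le> t3" | "t1 \<le> t3" "t3 \<le> t2" | "t2 \<le> t1" "t1 \<le> t3"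
    | "t2 \<le> t3" "t3 \<le> t1" | "t3 \<le> t1" "t1 \<le> t2" | "t3 \<le> t2" "t2 \<le> t1" by linarith
  thus ?thesis
  proof cases
    case 1 show ?thesis by (rule sorted) (use 1 in auto)
  next
    case 2 show ?thesis by (rule s23, rule sorted) (use 2 in auto)
  next
    case 3 show ?thesis by (rule s12, rule sorted) (use 3 in auto)
  next
    case 4 show ?thesis by (rule s12, rule s23, rule sorted) (use 4 in auto)
  next
    case 5 show ?thesis by (rule s23, rule s12, rule sorted) (use 5 in auto)
  next
    case 6 show ?thesis by (rule s12, rule s23, rule s12, rule sorted) (use 6 in auto)
  qed
qed

lemma unit_decomp:
  fixes e v :: "real^2"
  assumes "norm e = 1"
  shows "v = inner v e *\<^sub>R e + inner v (rot90 e) *\<^sub>R rot90 e"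
proof -
  have h: "e$1^2 + e$2^2 = 1" using assms norm2sq[of e] by simp
  have "(inner v e *\<^sub>R e + inner v (rot90 e) *\<^sub>R rot90 e)$1 = v$1 * (e$1^2 + e$2^2)"
    by (simp add: inner2 algebra_simps power2_eq_square)
  moreover have "(inner v e *\<^sub>R e + inner v (rot90 e) *\<^sub>R rot90 e)$2 = v$2 * (e$1^2 + e$2^2)"
    by (simp add: inner2 algebra_simps power2_eq_square)
  ultimately show ?thesis using h by (simp add: vec2_eq)
qed



context curve begin

lemma noncol_sorted:
  assumes t: "a \<le> t1" "t1 \<le> t2" "t2 \<le> t3" "t3 \<le> b"
    and q: "norm (Q1 - \<gamma> t1) < \<delta>" "norm (Q2 - \<gamma> t2) < \<delta>" "norm (Q3 - \<gamma> t3) < \<delta>"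
    and dpos: "0 < \<delta>"
  shows "FF Q1 Q2 Q3 < (s b)^3 / (8 * R1) + 2 * s b * \<delta> + 3 * \<delta>^2"
proof -
  define A where "A = s t2 - s t1"
  define B where "B = s t3 - s t2"
  define L where "L = s b"
  have A0: "0 \<le> A" and B0: "0 \<le> B" using s_mono t by (auto simp: A_def B_def)
  have ABL: "A + B \<le> L" using s_range[of t1 t3] t by (simp add: A_def B_def L_def)
  have "cross2 (\<gamma> t2 - \<gamma> t1) (\<gamma> t3 - \<gamma> t1) = cross2 (\<gamma> t2 - \<gamma> t1) (\<gamma> t3 - \<gamma> t2)"
    by (simp add: cross2_def algebra_simps)
  hence c1: "\<bar>cross2 (\<gamma> t2 - \<gamma> t1) (\<gamma> t3 - \<gamma> t1)\<bar> \<le> A * B * (A + B) / (2 * R1)"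
    using tri_bound[OF t] by (simp add: A_def B_def)
  have "4 * (A * B) \<le> (A + B)^2" using sum_squares_ge_zero[of "A - B" 0]
    by (simp add: power2_eq_square algebra_simps)
  hence "4 * (A * B) * (A + B) \<le> (A + B)^2 * (A + B)" using A0 B0 by (intro mult_right_mono) auto
  hence "(4 * (A * B) * (A + B)) / (8 * R1) \<le> ((A + B)^2 * (A + B)) / (8 * R1)"
    using R1pos by (intro divide_right_mono) auto
  moreover have "(4 * (A * B) * (A + B)) / (8 * R1) = A * B * (A + B) / (2 * R1)" by simp
  moreover have "(A + B)^2 * (A + B) = (A + B)^3" by (simp add: power2_eq_square power3_eq_cube)
  ultimately have "A * B * (A + B) / (2 * R1) \<le> (A + B)^3 / (8 * R1)" by simp
  also have "\<dots> \<le> L^3 / (8 * R1)"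
    using ABL A0 B0 R1pos by (intro divide_right_mono power_mono) auto
  finally have c2: "\<bar>cross2 (\<gamma> t2 - \<gamma> t1) (\<gamma> t3 - \<gamma> t1)\<bar> \<le> L^3 / (8 * R1)" using c1 by linarith
  have n1: "norm (\<gamma> t2 - \<gamma> t3) \<le> B" using chord[of t2 t3] t by (simp add: B_def norm_minus_commute)
  have n2: "norm (\<gamma> t3 - \<gamma> t1) \<le> A + B" using chord[of t1 t3] t by (simp add: A_def B_def)
  have n3: "norm (\<gamma> t1 - \<gamma> t2) \<le> A" using chord[of t1 t2] t by (simp add: A_def norm_minus_commute)
  have "\<delta> * (norm (\<gamma> t2 - \<gamma> t3) + norm (\<gamma> t3 - \<gamma> t1) + norm (\<gamma> t1 - \<gamma> t2)) \<le> \<delta> * (2 * L)"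
    using n1 n2 n3 ABL dpos by (intro mult_left_mono) auto
  moreover have "FF Q1 Q2 Q3 < \<bar>cross2 (\<gamma> t2 - \<gamma> t1) (\<gamma> t3 - \<gamma> t1)\<bar>
          + \<delta> * (norm (\<gamma> t2 - \<gamma> t3) + norm (\<gamma> t3 - \<gamma> t1) + norm (\<gamma> t1 - \<gamma> t2)) + 3 * \<delta>^2"
    unfolding FF_def by (rule perturb) (use q in \<open>simp_all add: norm_minus_commute\<close>)
  ultimately show ?thesis using c2 by (simp add: L_def algebra_simps)
qed

lemma noncol_any:
  assumes "t1 \<in> {a..b}" "t2 \<in> {a..b}" "t3 \<in> {a..b}"
    and "norm (Q1 - \<gamma> t1) < \<delta>" "norm (Q2 - \<gamma> t2) < \<delta>" "norm (Q3 - \<gamma> t3) < \<delta>"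
    and dpos: "0 < \<delta>"
  shows "FF Q1 Q2 Q3 < (s b)^3 / (8 * R1) + 2 * s b * \<delta> + 3 * \<delta>^2"
proof -
  define P where "P t1 t2 t3 Q1 Q2 Q3 \<longleftrightarrow> (t1 \<in> {a..b} \<and> t2 \<in> {a..b} \<and> t3 \<in> {a..b} \<and>
    norm (Q1 - \<gamma> t1) < \<delta> \<and> norm (Q2 - \<gamma> t2) < \<delta> \<and> norm (Q3 - \<gamma> t3) < \<delta> \<longrightarrow>
    FF Q1 Q2 Q3 < (s b)^3 / (8 * R1) + 2 * s b * \<delta> + 3 * \<delta>^2)" for t1 t2 t3 Q1 Q2 Q3
  have "P t1 t2 t3 Q1 Q2 Q3"
  proof (rule sort3[where P=P])
    show "P t1 t2 t3 q1 q2 q3" if "t1 \<le> t2" "t2 \<le> t3" for t1 t2 t3 q1 q2 q3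
      unfolding P_def using noncol_sorted[of t1 t2 t3 q1 \<delta> q2 q3] that dpos by auto
    show "P t1 t2 t3 q1 q2 q3" if "P t2 t1 t3 q2 q1 q3" for t1 t2 t3 q1 q2 q3
      using that FF_swap12[of q1 q2 q3] unfolding P_def by auto
    show "P t1 t2 t3 q1 q2 q3" if "P t1 t3 t2 q1 q3 q2" for t1 t2 t3 q1 q2 q3
      using that FF_swap23[of q1 q2 q3] unfolding P_def by auto
  qed
  thus ?thesis using assms unfolding P_def by blast
qed

lemma col_mid:
  assumes t: "tj \<in> {a..b}" "tM \<in> {a..b}" "tk \<in> {a..b}"
    and e: "norm e = 1"
    and x: "d \<le> inner e (PM - Pj)" "d \<le> inner e (Pk - PM)"
    and y: "inner (rot90 e) (Pj - PM) = 0" "inner (rot90 e) (Pk - PM) = 0"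
    and q: "norm (\<gamma> tj - Pj) < \<delta>" "norm (\<gamma> tM - PM) < \<delta>" "norm (\<gamma> tk - Pk) < \<delta>"
    and dd: "2 * \<delta> < d" "4 * R2 * \<delta> < (d - 2 * \<delta>)^2"
  shows False
proof -
  define n where "n = rot90 e"
  define N where "N = rot90 (T tM)"
  have nN: "norm N = 1" using norm_T[OF t(2)] by (simp add: N_def)
  define \<alpha> where "\<alpha> = inner N e"
  define \<beta> where "\<beta> = inner N n"
  have Ndec: "N = \<alpha> *\<^sub>R e + \<beta> *\<^sub>R n" unfolding \<alpha>_def \<beta>_def n_def by (rule unit_decomp[OF e])
  have "\<alpha>^2 + \<beta>^2 = 1" using frame_sq[OF e, of N] nN by (simp add: \<alpha>_def \<beta>_def n_def)
  hence "\<beta>^2 \<le> 1" using zero_le_power2[of \<alpha>] by linarith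
  hence b1: "\<bar>\<beta>\<bar> \<le> 1" by (simp add: abs_square_le_1)
  have key: False if tt: "t \<in> {a..b}" and D: "D = \<gamma> t - \<gamma> tM" and s1: "\<alpha> * inner e D \<le> 0"
    and s2: "\<bar>inner n D\<bar> < 2 * \<delta>" and s3: "d - 2 * \<delta> < \<bar>inner e D\<bar>" for t D
  proof -
    have "(norm D)^2 \<le> 2 * R2 * cross2 (T tM) D" using disk[OF t(2) tt] D by simp
    also have "cross2 (T tM) D = inner N D" by (simp add: N_def inner_rot90)
    also have "inner N D = \<alpha> * inner e D + \<beta> * inner n D"
      by (subst Ndec) (simp add: inner_add_left)
    also have "\<dots> \<le> \<beta> * inner n D" using s1 by simp
    also have "\<beta> * inner n D \<le> \<bar>\<beta>\<bar> * \<bar>inner n D\<bar>" by (simp add: abs_mult[symmetric])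
    also have "\<dots> \<le> 1 * \<bar>inner n D\<bar>" using b1 by (intro mult_right_mono) auto
    finally have "(norm D)^2 \<le> 2 * R2 * \<bar>inner n D\<bar>" using R2pos by (simp add: mult_left_mono)
    also have "\<dots> \<le> 2 * R2 * (2 * \<delta>)" using s2 R2pos by (intro mult_left_mono) auto
    finally have u: "(norm D)^2 \<le> 4 * R2 * \<delta>" by simp
    have "\<bar>inner e D\<bar> \<le> norm e * norm D" by (rule Cauchy_Schwarz_ineq2)
    hence "d - 2 * \<delta> < norm D" using s3 e by simp
    hence "(d - 2 * \<delta>)^2 < (norm D)^2" using dd by (intro power_strict_mono) auto
    thus False using u dd by simp
  qed
  have ie: "\<bar>inner v x\<bar> \<le> norm x" if "norm v = 1" for v x
    using Cauchy_Schwarz_ineq2[of v x] that by simp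
  have nn: "norm n = 1" using e by (simp add: n_def)
  have eps: "norm ((\<gamma> ti - Pi) - (\<gamma> tM - PM)) < 2 * \<delta>" if "norm (\<gamma> ti - Pi) < \<delta>" for ti Pi
    using norm_triangle_ineq4[of "\<gamma> ti - Pi" "\<gamma> tM - PM"] that q(2) by linarith
  have split: "\<gamma> ti - \<gamma> tM = (Pi - PM) + ((\<gamma> ti - Pi) - (\<gamma> tM - PM))" for ti Pi by simp
  show False
  proof (cases "0 \<le> \<alpha>")
    case True
    define D where "D = \<gamma> tj - \<gamma> tM"
    have E: "norm ((\<gamma> tj - Pj) - (\<gamma> tM - PM)) < 2 * \<delta>" by (rule eps[OF q(1)])
    have ie1: "inner e D = inner e (Pj - PM) + inner e ((\<gamma> tj - Pj) - (\<gamma> tM - PM))"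
      unfolding D_def inner_add_right[symmetric] by (rule arg_cong[where f="inner e"]) simp
    have ie2: "inner n D = inner n (Pj - PM) + inner n ((\<gamma> tj - Pj) - (\<gamma> tM - PM))"
      unfolding D_def inner_add_right[symmetric] by (rule arg_cong[where f="inner n"]) simp
    hence ie2: "inner n D = inner n ((\<gamma> tj - Pj) - (\<gamma> tM - PM))" using y(1) by (simp add: n_def)
    have "inner e (Pj - PM) = - inner e (PM - Pj)" by (simp add: inner_diff_right)
    hence "inner e D < - d + 2 * \<delta>" using ie1 ie[OF e, of "(\<gamma> tj - Pj) - (\<gamma> tM - PM)"] E x(1) by linarith
    moreover have "\<bar>inner n D\<bar> < 2 * \<delta>" using ie2 ie[OF nn, of "(\<gamma> tj - Pj) - (\<gamma> tM - PM)"] E by linarith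
    ultimately show False using key[OF t(1) D_def] True dd(1) mult_nonneg_nonpos[of \<alpha> "inner e D"] by force
  next
    case False
    define D where "D = \<gamma> tk - \<gamma> tM"
    have E: "norm ((\<gamma> tk - Pk) - (\<gamma> tM - PM)) < 2 * \<delta>" by (rule eps[OF q(3)])
    have ie1: "inner e D = inner e (Pk - PM) + inner e ((\<gamma> tk - Pk) - (\<gamma> tM - PM))"
      unfolding D_def inner_add_right[symmetric] by (rule arg_cong[where f="inner e"]) simp
    have ie2: "inner n D = inner n (Pk - PM) + inner n ((\<gamma> tk - Pk) - (\<gamma> tM - PM))"
      unfolding D_def inner_add_right[symmetric] by (rule arg_cong[where f="inner n"]) simp
    hence ie2: "inner n D = inner n ((\<gamma> tk - Pk) - (\<gamma> tM - PM))" using y(2) by (simp add: n_def)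
    have "inner e D > d - 2 * \<delta>" using ie1 ie[OF e, of "(\<gamma> tk - Pk) - (\<gamma> tM - PM)"] E x(2) by linarith
    moreover have "\<bar>inner n D\<bar> < 2 * \<delta>" using ie2 ie[OF nn, of "(\<gamma> tk - Pk) - (\<gamma> tM - PM)"] E by linarith
    ultimately show False using key[OF t(3) D_def] False dd(1) mult_nonpos_nonneg[of \<alpha> "inner e D"] by force
  qed
qed

end


lemma cross_lattice:
  "cross2 (of_int a *\<^sub>R v1 + of_int b *\<^sub>R v2) (of_int c *\<^sub>R v1 + of_int e *\<^sub>R v2)
   = of_int (a * e - b * c) * cross2 v1 v2"
  by (simp add: cross2_def algebra_simps)

theorem theorem7p6:
  fixes \<gamma> \<gamma>1 \<gamma>2 :: "real \<Rightarrow> real^2" and a b R1 R2 \<delta> :: real and v0 v1 v2 :: "real^2"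
  assumes ab: "a < b"
    and d1: "\<And>t. t \<in> {a..b} \<Longrightarrow> (\<gamma> has_vector_derivative \<gamma>1 t) (at t within {a..b})"
    and d2: "\<And>t. t \<in> {a..b} \<Longrightarrow> (\<gamma>1 has_vector_derivative \<gamma>2 t) (at t within {a..b})"
    and C2: "continuous_on {a..b} \<gamma>2"
    and nz1: "\<And>t. t \<in> {a..b} \<Longrightarrow> \<gamma>1 t \<noteq> 0"
    and nz2: "\<And>t. t \<in> {a..b} \<Longrightarrow> \<gamma>2 t \<noteq> 0"
    and kpos: "\<And>t. t \<in> {a..b} \<Longrightarrow> curvature \<gamma>1 \<gamma>2 t > 0"
    and arc: "inj_on \<gamma> {a..b}"
    and convex_arc: "\<exists>K. convex K \<and> \<gamma> ` {a..b} \<subseteq> frontier K"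
    and total_curv: "integral {a..b} (\<lambda>t. curvature \<gamma>1 \<gamma>2 t * norm (\<gamma>1 t)) \<le> pi"
    and R1pos: "0 < R1" and R12: "R1 \<le> R2"
    and rho: "\<And>t. t \<in> {a..b} \<Longrightarrow> R1 \<le> 1 / curvature \<gamma>1 \<gamma>2 t \<and> 1 / curvature \<gamma>1 \<gamma>2 t \<le> R2"
    and indep: "cross2 v1 v2 \<noteq> 0"
    and dpos: "0 < \<delta>"
    and dsmall: "\<delta> < (lattice_mindist (lattice v0 v1 v2))\<^sup>2 /
        (2 * (R2 + lattice_mindist (lattice v0 v1 v2)
          + sqrt ((R2 + lattice_mindist (lattice v0 v1 v2))\<^sup>2 - (lattice_mindist (lattice v0 v1 v2))\<^sup>2)))"
    and main: "(integral {a..b} (\<lambda>t. norm (\<gamma>1 t)))^3 / (8 * R1)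
        + 2 * integral {a..b} (\<lambda>t. norm (\<gamma>1 t)) * \<delta> + 3 * \<delta>\<^sup>2 \<le> lattice_area v1 v2"
  shows "finite {Q \<in> lattice v0 v1 v2. infdist Q (\<gamma> ` {a..b}) < \<delta>}
    \<and> card {Q \<in> lattice v0 v1 v2. infdist Q (\<gamma> ` {a..b}) < \<delta>} \<le> 2"
proof -
  interpret curve \<gamma> \<gamma>1 \<gamma>2 a b R1 R2
    by unfold_locales (use ab d1 d2 C2 nz1 kpos total_curv R1pos R12 rho in auto)
  define Lat where "Lat = lattice v0 v1 v2"
  define d where "d = lattice_mindist Lat"
  define S where "S = {Q \<in> Lat. infdist Q (\<gamma> ` {a..b}) < \<delta>}"
  define Ds where "Ds = {dist P Q | P Q. P \<in> Lat \<and> Q \<in> Lat \<and> P \<noteq> Q}"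
  have dDs: "d = Inf Ds" by (simp add: d_def lattice_mindist_def Ds_def)
  have bdd: "bdd_below Ds" unfolding Ds_def by (rule bdd_belowI[of _ 0]) auto
  have dist_ge: "d \<le> dist P Q" if "P \<in> Lat" "Q \<in> Lat" "P \<noteq> Q" for P Q
    unfolding dDs by (rule cInf_lower[OF _ bdd]) (use that in \<open>auto simp: Ds_def\<close>)
  have v1nz: "v1 \<noteq> 0" using indep by (auto simp: cross2_def)
  have inLat: "v0 + of_int m *\<^sub>R v1 + of_int n *\<^sub>R v2 \<in> Lat" for m n
    by (auto simp: Lat_def lattice_def)
  have "v0 \<in> Lat" using inLat[of 0 0] by simp
  moreover have "v0 + v1 \<in> Lat" using inLat[of 1 0] by simp
  moreover have "v0 \<noteq> v0 + v1" using v1nz by simp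
  ultimately have "Ds \<noteq> {}" unfolding Ds_def by blast
  hence d0: "0 \<le> d" unfolding dDs by (rule cInf_greatest) (auto simp: Ds_def)
  have R2pos: "0 < R2" using R1pos R12 by simp
  define K where "K = R2 + d"
  define Sq where "Sq = sqrt (K^2 - d^2)"
  have dsm: "\<delta> < d^2 / (2 * (K + Sq))" using dsmall by (simp add: d_def Lat_def K_def Sq_def)
  have KK: "K^2 - d^2 = R2^2 + 2 * R2 * d" by (simp add: K_def power2_eq_square algebra_simps)
  have KK0: "0 \<le> K^2 - d^2" unfolding KK using R2pos d0 by simp
  have Sq0: "0 \<le> Sq" using KK0 by (simp add: Sq_def)
  have Sq2: "Sq^2 = K^2 - d^2" unfolding Sq_def by (rule real_sqrt_pow2[OF KK0])
  have Kpos: "0 < K" using R2pos d0 by (simp add: K_def)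
  have dpos': "0 < d"
  proof (rule ccontr)
    assume "\<not> 0 < d"
    hence "d = 0" using d0 by simp
    thus False using dsm dpos by simp
  qed
  have "d^2 = (K - Sq) * (K + Sq)" using Sq2 by (simp add: power2_eq_square algebra_simps)
  hence d0eq: "d^2 / (2 * (K + Sq)) = (K - Sq) / 2" using Kpos Sq0 by (simp add: field_simps)
  have dd1: "2 * \<delta> < d"
  proof -
    have "d^2 / (2 * (K + Sq)) \<le> d^2 / (2 * K)" using Kpos Sq0 by (intro divide_left_mono) auto
    also have "\<dots> < d / 2" using dpos' R2pos by (simp add: K_def field_simps power2_eq_square)
    finally show ?thesis using dsm by linarith
  qed
  have dd2: "4 * R2 * \<delta> < (d - 2 * \<delta>)^2"
  proof -
    have h1: "0 < (K - Sq) / 2 - \<delta>" using dsm d0eq by linarith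
    have h2: "0 < (K + Sq) / 2 - \<delta>" using h1 Sq0 by simp
    have "0 < ((K - Sq) / 2 - \<delta>) * ((K + Sq) / 2 - \<delta>)" using h1 h2 by simp
    also have "((K - Sq) / 2 - \<delta>) * ((K + Sq) / 2 - \<delta>) = ((d - 2 * \<delta>)^2 - 4 * R2 * \<delta>) / 4"
      using Sq2 by (simp add: K_def power2_eq_square field_simps)
    finally show ?thesis by simp
  qed
  have Leq: "integral {a..b} (\<lambda>t. norm (\<gamma>1 t)) = s b" by (simp add: s_def nr_def[abs_def])
  have near: "\<exists>t\<in>{a..b}. norm (Q - \<gamma> t) < \<delta>" if "Q \<in> S" for Q
  proof -
    have cl: "closed (\<gamma> ` {a..b})"
      by (intro compact_imp_closed compact_continuous_image cont_g compact_Icc)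
    have ne: "\<gamma> ` {a..b} \<noteq> {}" using ab by auto
    obtain x where x: "x \<in> \<gamma> ` {a..b}" "infdist Q (\<gamma> ` {a..b}) = dist Q x"
      using infdist_attains_inf[OF cl ne] by blast
    thus ?thesis using that by (auto simp: S_def dist_norm)
  qed
  have no3: False if P: "P1 \<in> S" "P2 \<in> S" "P3 \<in> S" "P1 \<noteq> P2" "P2 \<noteq> P3" "P1 \<noteq> P3" for P1 P2 P3
  proof -
    obtain t1 where t1: "t1 \<in> {a..b}" "norm (P1 - \<gamma> t1) < \<delta>" using near[OF P(1)] by blast
    obtain t2 where t2: "t2 \<in> {a..b}" "norm (P2 - \<gamma> t2) < \<delta>" using near[OF P(2)] by blast
    obtain t3 where t3: "t3 \<in> {a..b}" "norm (P3 - \<gamma> t3) < \<delta>" using near[OF P(3)] by blast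
    have L: "P1 \<in> Lat" "P2 \<in> Lat" "P3 \<in> Lat" using P by (auto simp: S_def)
    obtain m1 n1 where mn1: "P1 = v0 + of_int m1 *\<^sub>R v1 + of_int n1 *\<^sub>R v2" using L(1) by (auto simp: Lat_def lattice_def)
    obtain m2 n2 where mn2: "P2 = v0 + of_int m2 *\<^sub>R v1 + of_int n2 *\<^sub>R v2" using L(2) by (auto simp: Lat_def lattice_def)
    obtain m3 n3 where mn3: "P3 = v0 + of_int m3 *\<^sub>R v1 + of_int n3 *\<^sub>R v2" using L(3) by (auto simp: Lat_def lattice_def)
    define k where "k = (m2 - m1) * (n3 - n1) - (n2 - n1) * (m3 - m1)"
    have "P2 - P1 = of_int (m2 - m1) *\<^sub>R v1 + of_int (n2 - n1) *\<^sub>R v2"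
      by (simp add: mn1 mn2 algebra_simps)
    moreover have "P3 - P1 = of_int (m3 - m1) *\<^sub>R v1 + of_int (n3 - n1) *\<^sub>R v2"
      by (simp add: mn1 mn3 algebra_simps)
    ultimately have crk: "cross2 (P2 - P1) (P3 - P1) = of_int k * cross2 v1 v2"
      by (simp only: cross_lattice k_def)
    show False
    proof (cases "k = 0")
      case False
      have "1 \<le> \<bar>k\<bar>" using False by linarith
      hence k1: "(1::real) \<le> \<bar>of_int k\<bar>" by (metis of_int_1_le_iff of_int_abs)
      have "lattice_area v1 v2 = 1 * \<bar>cross2 v1 v2\<bar>" by (simp add: lattice_area_def)
      also have "\<dots> \<le> \<bar>of_int k\<bar> * \<bar>cross2 v1 v2\<bar>" using k1 by (intro mult_right_mono) auto
      also have "\<dots> = FF P1 P2 P3" by (simp add: FF_def crk abs_mult)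
      also have "FF P1 P2 P3 < (s b)^3 / (8 * R1) + 2 * s b * \<delta> + 3 * \<delta>^2"
        by (rule noncol_any[OF t1(1) t2(1) t3(1) t1(2) t2(2) t3(2) dpos])
      also have "\<dots> \<le> lattice_area v1 v2" using main by (simp add: Leq)
      finally show False by simp
    next
      case True
      hence cr0: "cross2 (P2 - P1) (P3 - P1) = 0" using crk by simp
      define e where "e = (1 / norm (P2 - P1)) *\<^sub>R (P2 - P1)"
      have ne: "norm (P2 - P1) \<noteq> 0" using P by simp
      have e: "norm e = 1" using ne by (simp add: e_def)
      have n2: "inner (rot90 e) (P2 - P1) = 0" by (simp add: e_def inner_rot90 cross2_scale_left)
      have n3: "inner (rot90 e) (P3 - P1) = 0" using cr0 by (simp add: e_def inner_rot90 cross2_scale_left)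
      have nz: "inner (rot90 e) (A - B) = 0" if "A \<in> {P1, P2, P3}" "B \<in> {P1, P2, P3}" for A B
      proof -
        have "inner (rot90 e) (A - P1) = 0" "inner (rot90 e) (B - P1) = 0" using that n2 n3 by auto
        moreover have "A - B = (A - P1) - (B - P1)" by simp
        ultimately show ?thesis by (simp add: inner_diff_right)
      qed
      have xd: "d \<le> \<bar>inner e (A - B)\<bar>" if "A \<in> {P1, P2, P3}" "B \<in> {P1, P2, P3}" "A \<noteq> B" for A B
      proof -
        have "A - B = inner (A - B) e *\<^sub>R e + inner (A - B) (rot90 e) *\<^sub>R rot90 e" by (rule unit_decomp[OF e])
        hence "A - B = inner e (A - B) *\<^sub>R e" using nz[OF that(1,2)] by (simp add: inner_commute)
        hence "norm (A - B) = \<bar>inner e (A - B)\<bar>" using e by (metis norm_scaleR mult.right_neutral)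
        moreover have "d \<le> dist A B" using that L by (intro dist_ge) auto
        ultimately show ?thesis by (simp add: dist_norm)
      qed
      have xe: "inner e (A - B) = inner e (A - P1) - inner e (B - P1)" for A B
        by (simp add: inner_diff_right)
      define x2 where "x2 = inner e (P2 - P1)"
      define x3 where "x3 = inner e (P3 - P1)"
      have ax2: "d \<le> \<bar>x2\<bar>" using xd[of P2 P1] P by (simp add: x2_def)
      have ax3: "d \<le> \<bar>x3\<bar>" using xd[of P3 P1] P by (simp add: x3_def)
      have ax32: "d \<le> \<bar>x3 - x2\<bar>" using xd[of P3 P2] P xe[of P3 P2] by (simp add: x2_def x3_def)
      have e21: "inner e (P2 - P1) = x2" "inner e (P1 - P2) = - x2" by (simp_all add: x2_def inner_diff_right)
      have e31: "inner e (P3 - P1) = x3" "inner e (P1 - P3) = - x3" by (simp_all add: x3_def inner_diff_right)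
      have e32: "inner e (P3 - P2) = x3 - x2" "inner e (P2 - P3) = x2 - x3"
        using xe[of P3 P2] xe[of P2 P3] by (simp_all add: x2_def x3_def)
      have q: "norm (\<gamma> t1 - P1) < \<delta>" "norm (\<gamma> t2 - P2) < \<delta>" "norm (\<gamma> t3 - P3) < \<delta>"
        using t1 t2 t3 by (simp_all add: norm_minus_commute)
      have nzs: "inner (rot90 e) (A - B) = 0" if "A \<in> {P1, P2, P3}" "B \<in> {P1, P2, P3}" for A B
        using nz[OF that] .
      consider "0 < x2" "x2 < x3" | "0 < x3" "x3 < x2" | "x2 < 0" "0 < x3" | "x3 < 0" "0 < x2"
        | "x2 < x3" "x3 < 0" | "x3 < x2" "x2 < 0"
        using ax2 ax3 ax32 dpos' by (cases "x2 < x3"; cases "0 < x2"; cases "0 < x3") auto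
      thus False
      proof cases
        case 1
        show False by (rule col_mid[where tj=t1 and tM=t2 and tk=t3 and Pj=P1 and PM=P2 and Pk=P3 and e=e and d=d and \<delta>=\<delta>])
          (use t1 t2 t3 e q dd1 dd2 nzs e21 e31 e32 1 ax2 ax3 ax32 in auto)
      next
        case 2
        show False by (rule col_mid[where tj=t1 and tM=t3 and tk=t2 and Pj=P1 and PM=P3 and Pk=P2 and e=e and d=d and \<delta>=\<delta>])
          (use t1 t2 t3 e q dd1 dd2 nzs e21 e31 e32 2 ax2 ax3 ax32 in auto)
      next
        case 3
        show False by (rule col_mid[where tj=t2 and tM=t1 and tk=t3 and Pj=P2 and PM=P1 and Pk=P3 and e=e and d=d and \<delta>=\<delta>])
          (use t1 t2 t3 e q dd1 dd2 nzs e21 e31 e32 3 ax2 ax3 ax32 in auto)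
      next
        case 4
        show False by (rule col_mid[where tj=t3 and tM=t1 and tk=t2 and Pj=P3 and PM=P1 and Pk=P2 and e=e and d=d and \<delta>=\<delta>])
          (use t1 t2 t3 e q dd1 dd2 nzs e21 e31 e32 4 ax2 ax3 ax32 in auto)
      next
        case 5
        show False by (rule col_mid[where tj=t2 and tM=t3 and tk=t1 and Pj=P2 and PM=P3 and Pk=P1 and e=e and d=d and \<delta>=\<delta>])
          (use t1 t2 t3 e q dd1 dd2 nzs e21 e31 e32 5 ax2 ax3 ax32 in auto)
      next
        case 6
        show False by (rule col_mid[where tj=t3 and tM=t2 and tk=t1 and Pj=P3 and PM=P2 and Pk=P1 and e=e and d=d and \<delta>=\<delta>])
          (use t1 t2 t3 e q dd1 dd2 nzs e21 e31 e32 6 ax2 ax3 ax32 in auto)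
      qed
    qed
  qed
  have no3B: False if BB: "B \<subseteq> S" "card B = 3" for B
  proof -
    obtain x y z where "B = {x, y, z}" "x \<noteq> y" "y \<noteq> z" "x \<noteq> z" using card_3_iff[THEN iffD1, OF BB(2)] by blast
    thus False using no3[of x y z] BB(1) by auto
  qed
  have fin: "finite S"
  proof (rule ccontr)
    assume "\<not> finite S"
    then obtain B where "finite B" "card B = 3" "B \<subseteq> S" using infinite_arbitrarily_large by blast
    thus False using no3B by blast
  qed
  have "card S \<le> 2"
  proof (rule ccontr)
    assume "\<not> card S \<le> 2"
    hence "3 \<le> card S" by simp
    then obtain B where "B \<subseteq> S" "card B = 3" by (rule obtain_subset_with_card_n)
    thus False using no3B by blast
  qed
  with fin show ?thesis by (simp add: S_def Lat_def)
qed


end
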